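(* Assume that $k\le M_1\log p$, $s>2$, $s^2k^{-1}(k+\log p)^2>Cn^{(0)}$, $p>s^\mu$, and $s[1+(\log p)/k]/n^{(0)}=o(1)$, for some sufficiently large constants $M_1,C>0$ and some $\mu>2$. Then, given any $\alpha<\beta<1$ and some constant $c>0$, there exists no test of asymptotic significance level $\alpha$ for $H_{0,ab}$ satisfying $\lim_{n^{(0)}\to\infty}\inf_{v\in\mathcal A(c)}\mathbb P_v(\text{test rejects }H_{0,ab})\ge\beta$ with $\mathcal A(c)=\mathcal A^{l1}(s,c\epsilon_n,\xi)$ and $\epsilon_n=\sqrt{k/n^{(0)}}$.
   Context: Model: for $t=1,\dots,k$, $X^{(t)}\sim N(0,(\Omega^{(t)})^{-1})$ on $\mathbb R^p$, $\Omega^{(t)}=(\omega^{(t)}_{a,b})$ positive definite; for each $t$ one observes $n^{(t)}$ i.i.d. copies, independent across $t$; $n^{(0)}=\min_tn^{(t)}$, and the sample sizes satisfy Condition 2: $n^{(t)}$ of the same order with $\max_tn^{(t)}/n^{(0)}\le M_0$. Fix a pair $a\ne b$ and a sign vector $\xi\in\{1,-1\}^k$. $\omega^0_{a,b}=(\omega^{(1)}_{a,b},\dots,\omega^{(k)}_{a,b})'$, $\|\cdot\|_1$ the $\ell_1$ norm. Condition 1: there is a constant $M>0$ with $1/M\le\lambda_{\min}(\Omega^{(t)})\le\lambda_{\max}(\Omega^{(t)})\le M$ for all $t$. With $\Omega^0=\{\Omega^{(t)}\}_{t=1}^k$ and positive integer $s$: $\mathcal F(s)=\{\Omega^0:\max_a\sum_{b\ne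 a}1\{\omega^0_{a,b}\ne\mathbf0\}\le s$ and Condition 1 holds$\}$; $H_{0,ab}:\Omega^0\in\{\Omega^0\in\mathcal F(s):\omega^0_{a,b}=\mathbf0\}$; $\mathcal A^{l1}(s,\epsilon,\xi)=\{\Omega^0\in\mathcal F(s):\xi'\omega^0_{a,b}=\|\omega^0_{a,b}\|_1\ge\epsilon\}$. A test is a $\{0,1\}$-valued function of the data; it has asymptotic significance level $\alpha$ if its rejection probability under $H_{0,ab}$ tends to (at most) $\alpha$ as $n^{(0)}\to\infty$; $\mathbb P_v$ is the data law under parameter $v$. Asymptotics as $n^{(0)}\to\infty$ with $p,k,s$ allowed to depend on $n^{(0)}$. *)

theory Defs
  imports "HOL-Probability.Probability" "Jordan_Normal_Form.Char_Poly"
begin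

text \<open>Condition 1 for a single p x p precision matrix: symmetric, and all
  eigenvalues lie in [1/M, M] (for a real symmetric matrix all eigenvalues are real,
  so these are lambda_min >= 1/M and lambda_max <= M).\<close>
definition cond1 :: "real \<Rightarrow> nat \<Rightarrow> real mat \<Rightarrow> bool" where
  "cond1 M p A \<longleftrightarrow> A \<in> carrier_mat p p \<and> transpose_mat A = A \<and>
     (\<forall>e. eigenvalue A e \<longrightarrow> 1 / M \<le> e \<and> e \<le> M)"

definition F_class :: "real \<Rightarrow> nat \<Rightarrow> nat \<Rightarrow> nat \<Rightarrow> (nat \<Rightarrow> real mat) set" where
  "F_class M p k s = {Om. (\<forall>t<k. cond1 M p (Om t)) \<and>
     (\<forall>a<p. card {b. b < p \<and> b \<noteq> a \<and> (\<exists>t<k. Om t $$ (a, b) \<noteq> 0)} \<le> s)}"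

definition H0_set :: "real \<Rightarrow> nat \<Rightarrow> nat \<Rightarrow> nat \<Rightarrow> nat \<Rightarrow> nat \<Rightarrow> (nat \<Rightarrow> real mat) set" where
  "H0_set M p k s a b = {Om \<in> F_class M p k s. \<forall>t<k. Om t $$ (a, b) = 0}"

definition Al1_set :: "real \<Rightarrow> nat \<Rightarrow> nat \<Rightarrow> nat \<Rightarrow> nat \<Rightarrow> nat \<Rightarrow> real \<Rightarrow> (nat \<Rightarrow> real)
     \<Rightarrow> (nat \<Rightarrow> real mat) set" where
  "Al1_set M p k s a b eps xi = {Om \<in> F_class M p k s.
     (\<Sum>t<k. xi t * Om t $$ (a, b)) = (\<Sum>t<k. \<bar>Om t $$ (a, b)\<bar>) \<and>
     (\<Sum>t<k. \<bar>Om t $$ (a, b)\<bar>) \<ge> eps}"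

definition gauss_dens :: "nat \<Rightarrow> real mat \<Rightarrow> (nat \<Rightarrow> real) \<Rightarrow> real" where
  "gauss_dens p Om y = (2 * pi) powr (- (real p / 2)) * sqrt (det Om) *
     exp (- (1/2) * (\<Sum>i<p. \<Sum>j<p. y i * Om $$ (i, j) * y j))"

text \<open>Index set of the whole data: (t, i, j) = coordinate j of the i-th observation
  of population t.\<close>
definition data_idx :: "nat \<Rightarrow> nat \<Rightarrow> (nat \<Rightarrow> nat) \<Rightarrow> (nat \<times> nat \<times> nat) set" where
  "data_idx p k n = {(t, i, j). t < k \<and> i < n t \<and> j < p}"

definition data_space :: "nat \<Rightarrow> nat \<Rightarrow> (nat \<Rightarrow> nat) \<Rightarrow> (nat \<times> nat \<times> nat \<Rightarrow> real) measure" where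
  "data_space p k n = PiM (data_idx p k n) (\<lambda>_. lborel)"

definition data_law :: "nat \<Rightarrow> nat \<Rightarrow> (nat \<Rightarrow> nat) \<Rightarrow> (nat \<Rightarrow> real mat)
     \<Rightarrow> (nat \<times> nat \<times> nat \<Rightarrow> real) measure" where
  "data_law p k n Om = density (data_space p k n)
     (\<lambda>x. ennreal (\<Prod>t<k. \<Prod>i<n t. gauss_dens p (Om t) (\<lambda>j. x (t, i, j))))"

definition rej_prob :: "nat \<Rightarrow> nat \<Rightarrow> (nat \<Rightarrow> nat) \<Rightarrow> (nat \<Rightarrow> real mat)
     \<Rightarrow> ((nat \<times> nat \<times> nat \<Rightarrow> real) \<Rightarrow> bool) \<Rightarrow> real" where
  "rej_prob p k n Om phi = measure (data_law p k n Om)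
     {x \<in> space (data_law p k n Om). phi x}"

end

theory Submission
  imports Defs
begin

definition shA :: "nat \<Rightarrow> nat \<Rightarrow> nat \<Rightarrow> real \<Rightarrow> real mat" where
  "shA p a b d = mat p p (\<lambda>(i,j). if i = j then 1 else if i = a \<and> j = b then d else 0)"

definition Omd :: "nat \<Rightarrow> nat \<Rightarrow> nat \<Rightarrow> real \<Rightarrow> real mat" where
  "Omd p a b d = transpose_mat (shA p a b d) * shA p a b d"

lemma shA_carrier[simp]: "shA p a b d \<in> carrier_mat p p"
  by (simp add: shA_def)

lemma Omd_carrier[simp]: "Omd p a b d \<in> carrier_mat p p"
  unfolding Omd_def by (rule mult_carrier_mat[of _ p p]) auto

lemma dim_Omd[simp]: "dim_row (Omd p a b d) = p" "dim_col (Omd p a b d) = p"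
  using carrier_matD[OF Omd_carrier[of p a b d]] by auto

lemma shA_entry: "i < p \<Longrightarrow> j < p \<Longrightarrow> a \<noteq> b \<Longrightarrow>
   shA p a b d $$ (i,j) = (if i = j then 1 else 0) + (if i = a \<and> j = b then d else 0)"
  by (auto simp: shA_def)

lemma Omd_entry:
  assumes "i < p" "j < p" "a < p" "b < p" "a \<noteq> b"
  shows "Omd p a b d $$ (i,j) = (if i = j then 1 else 0) + (if i = a \<and> j = b then d else 0)
     + (if i = b \<and> j = a then d else 0) + (if i = b \<and> j = b then d^2 else 0)" (is "_ = ?rhs")
proof -
  have "Omd p a b d $$ (i,j) = (\<Sum>l<p. shA p a b d $$ (l,i) * shA p a b d $$ (l,j))"
    using assms by (simp add: Omd_def shA_def scalar_prod_def lessThan_atLeast0)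
  also have "\<dots> = (\<Sum>l<p. ((if l = i then 1 else 0) + (if l = a \<and> i = b then d else 0)) *
        ((if l = j then 1 else 0) + (if l = a \<and> j = b then d else 0)))"
    using assms by (intro sum.cong) (auto simp: shA_entry)
  also have "\<dots> = (\<Sum>l<p. (if l = i then (if i = j then 1 else 0) else 0)
       + (if l = a then (if i = a \<and> j = b then d else 0) else 0)
       + (if l = a then (if i = b \<and> j = a then d else 0) else 0)
       + (if l = a then (if i = b \<and> j = b then d^2 else 0) else 0))"
    using assms by (intro sum.cong) (auto simp: power2_eq_square)
  also have "\<dots> = ?rhs"
    using assms by (simp only: sum.distrib sum.delta) simp
  finally show ?thesis .
qed

lemma Omd_quad2:
  assumes "a < p" "b < p" "a \<noteq> b"
  shows "(\<Sum>i<p. \<Sum>j<p. y i * Omd p a b d $$ (i,j) * y j) =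
         (\<Sum>i<p. (y i)^2) + 2 * d * y a * y b + d^2 * (y b)^2"
proof -
  have inner: "(\<Sum>j<p. y i * Omd p a b d $$ (i,j) * y j) =
      (y i)^2 + (if i = a then d * y a * y b else 0) + (if i = b then d * y a * y b + d^2 * (y b)^2 else 0)"
    if i: "i < p" for i
  proof -
    have "(\<Sum>j<p. y i * Omd p a b d $$ (i,j) * y j) = (\<Sum>j<p.
        (if j = i then (y i)^2 else 0) + (if j = b then (if i = a then d * y a * y b else 0) else 0)
        + (if j = a then (if i = b then d * y a * y b else 0) else 0)
        + (if j = b then (if i = b then d^2 * (y b)^2 else 0) else 0))"
      using assms i by (intro sum.cong) (auto simp: Omd_entry power2_eq_square algebra_simps)
    also have "\<dots> = (y i)^2 + (if i = a then d * y a * y b else 0) + (if i = b then d * y a * y b else 0) + (if i = b then d^2 * (y b)^2 else 0)"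
      using assms i by (simp only: sum.distrib sum.delta) simp
    finally show ?thesis by simp
  qed
  have "(\<Sum>i<p. \<Sum>j<p. y i * Omd p a b d $$ (i,j) * y j) = (\<Sum>i<p.
      (y i)^2 + (if i = a then d * y a * y b else 0) + (if i = b then d * y a * y b + d^2 * (y b)^2 else 0))"
    by (intro sum.cong) (auto simp: inner)
  also have "\<dots> = (\<Sum>i<p. (y i)^2) + 2 * d * y a * y b + d^2 * (y b)^2"
    using assms by (simp only: sum.distrib sum.delta) simp
  finally show ?thesis .
qed

lemma Omd_quad:
  assumes "a < p" "b < p" "a \<noteq> b"
  shows "(\<Sum>i<p. \<Sum>j<p. y i * Omd p a b d $$ (i,j) * y j) =
         (\<Sum>l<p. (y l + (if l = a then d * y b else 0))^2)"
proof -
  have inner: "(\<Sum>j<p. y i * Omd p a b d $$ (i,j) * y j) =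
      (y i)^2 + (if i = a then d * y a * y b else 0) + (if i = b then d * y a * y b + d^2 * (y b)^2 else 0)"
    if i: "i < p" for i
  proof -
    have "(\<Sum>j<p. y i * Omd p a b d $$ (i,j) * y j) = (\<Sum>j<p.
        (if j = i then (y i)^2 else 0) + (if j = b then (if i = a then d * y a * y b else 0) else 0)
        + (if j = a then (if i = b then d * y a * y b else 0) else 0)
        + (if j = b then (if i = b then d^2 * (y b)^2 else 0) else 0))"
      using assms i by (intro sum.cong) (auto simp: Omd_entry power2_eq_square algebra_simps)
    also have "\<dots> = (y i)^2 + (if i = a then d * y a * y b else 0) + (if i = b then d * y a * y b else 0) + (if i = b then d^2 * (y b)^2 else 0)"
      using assms i by (simp only: sum.distrib sum.delta) simp
    finally show ?thesis by simp
  qed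
  have "(\<Sum>i<p. \<Sum>j<p. y i * Omd p a b d $$ (i,j) * y j) = (\<Sum>i<p.
      (y i)^2 + (if i = a then d * y a * y b else 0) + (if i = b then d * y a * y b + d^2 * (y b)^2 else 0))"
    by (intro sum.cong) (auto simp: inner)
  also have "\<dots> = (\<Sum>i<p. (y i)^2) + 2 * d * y a * y b + d^2 * (y b)^2"
    using assms by (simp only: sum.distrib sum.delta) simp
  moreover have "(\<Sum>l<p. (y l + (if l = a then d * y b else 0))^2) =
     (\<Sum>l<p. (y l)^2 + (if l = a then 2 * d * y a * y b + d^2 * (y b)^2 else 0))"
    by (intro sum.cong) (auto simp: power2_eq_square algebra_simps)
  moreover have "\<dots> = (\<Sum>i<p. (y i)^2) + 2 * d * y a * y b + d^2 * (y b)^2"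
    using assms by (simp only: sum.distrib sum.delta) simp
  ultimately show ?thesis by simp
qed

lemma Omd_transpose: "transpose_mat (Omd p a b d) = Omd p a b d"
  unfolding Omd_def by (subst transpose_mult[of _ p p _ p]) auto

lemma det_shA: assumes "a \<noteq> b" shows "det (shA p a b d) = 1"
proof (cases "a < b")
  case True
  have "upper_triangular (shA p a b d)"
    using True by (auto simp: upper_triangular_def shA_def)
  then have "det (shA p a b d) = prod_list (diag_mat (shA p a b d))"
    by (rule det_upper_triangular[of _ p]) simp
  also have "diag_mat (shA p a b d) = replicate p 1"
    by (rule nth_equalityI) (auto simp: diag_mat_def shA_def)
  finally show ?thesis by simp
next
  case False
  then have "det (shA p a b d) = prod_list (diag_mat (shA p a b d))"
    using assms by (intro det_lower_triangular[of p]) (auto simp: shA_def)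
  also have "diag_mat (shA p a b d) = replicate p 1"
    by (rule nth_equalityI) (auto simp: diag_mat_def shA_def)
  finally show ?thesis by simp
qed

lemma det_Omd: assumes "a \<noteq> b" shows "det (Omd p a b d) = 1"
  unfolding Omd_def using assms
  by (subst det_mult[of _ p]) (auto simp: det_transpose[of _ p] det_shA)

lemma Omd_eigen:
  assumes ab: "a < p" "b < p" "a \<noteq> b" and ev: "eigenvalue (Omd p a b d) e"
  shows "1 - \<bar>d\<bar> \<le> e \<and> e \<le> 1 + \<bar>d\<bar> + d^2"
proof -
  obtain v where v: "v \<in> carrier_vec p" "v \<noteq> 0\<^sub>v p" "Omd p a b d *\<^sub>v v = e \<cdot>\<^sub>v v"
    using ev by (auto simp: eigenvalue_def eigenvector_def)
  define y where "y = (\<lambda>i. v $ i)"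
  have comp: "(\<Sum>j<p. Omd p a b d $$ (i,j) * y j) = e * y i" if "i < p" for i
  proof -
    have "(Omd p a b d *\<^sub>v v) $ i = (e \<cdot>\<^sub>v v) $ i" using v by simp
    then show ?thesis using that v(1) by (simp add: scalar_prod_def lessThan_atLeast0 y_def)
  qed
  define S where "S = (\<Sum>i<p. (y i)^2)"
  have "(\<Sum>i<p. \<Sum>j<p. y i * Omd p a b d $$ (i,j) * y j) = (\<Sum>i<p. y i * (e * y i))"
    by (intro sum.cong) (auto simp: comp[symmetric] sum_distrib_left mult.assoc)
  also have "\<dots> = e * S" by (simp add: S_def sum_distrib_left power2_eq_square algebra_simps)
  finally have eS: "e * S = S + 2 * d * y a * y b + d^2 * (y b)^2"
    using Omd_quad2[OF ab, of y d] by (simp add: S_def)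
  have Spos: "S > 0"
  proof -
    obtain i where i: "i < p" "v $ i \<noteq> 0"
      using v(1,2) by (metis carrier_vecD eq_vecI index_zero_vec(1) index_zero_vec(2))
    have "(y i)^2 \<le> S" unfolding S_def
      by (rule member_le_sum) (use i in auto)
    moreover have "(y i)^2 > 0" using i by (simp add: y_def)
    ultimately show ?thesis by linarith
  qed
  have ab2: "(y a)^2 + (y b)^2 \<le> S"
  proof -
    have "(\<Sum>i\<in>{a,b}. (y i)^2) \<le> S" unfolding S_def
      by (rule sum_mono2) (use ab in auto)
    then show ?thesis using ab by simp
  qed
  have "\<bar>2 * y a * y b\<bar> \<le> (y a)^2 + (y b)^2"
  proof -
    have "\<bar>2 * y a * y b\<bar> = 2 * \<bar>y a\<bar> * \<bar>y b\<bar>" by (simp add: abs_mult)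
    also have "\<dots> \<le> (y a)^2 + (y b)^2"
      using zero_le_power2[of "\<bar>y a\<bar> - \<bar>y b\<bar>"] unfolding power2_diff power2_abs by linarith
    finally show ?thesis .
  qed
  then have "\<bar>2 * y a * y b\<bar> \<le> S" using ab2 by linarith
  then have "\<bar>d\<bar> * \<bar>2 * y a * y b\<bar> \<le> \<bar>d\<bar> * S" by (rule mult_left_mono) simp
  then have t: "\<bar>2 * d * y a * y b\<bar> \<le> \<bar>d\<bar> * S"
    by (simp add: abs_mult mult.assoc mult.left_commute)
  have "(y b)^2 \<le> S" using ab2 zero_le_power2[of "y a"] by linarith
  then have u: "d^2 * (y b)^2 \<le> d^2 * S" "0 \<le> d^2 * (y b)^2"
    by (auto intro: mult_left_mono)
  have t2: "- (\<bar>d\<bar> * S) \<le> 2 * d * y a * y b" "2 * d * y a * y b \<le> \<bar>d\<bar> * S"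
    using t by (auto simp: abs_le_iff)
  have q1: "(1 - \<bar>d\<bar>) * S = S - \<bar>d\<bar> * S" by (simp add: algebra_simps)
  have q2: "(1 + \<bar>d\<bar> + d^2) * S = S + \<bar>d\<bar> * S + d^2 * S"
    by (simp add: algebra_simps)
  have r1: "(1 - \<bar>d\<bar>) * S \<le> e * S" unfolding q1 eS using t2 u by linarith
  have r2: "e * S \<le> (1 + \<bar>d\<bar> + d^2) * S" unfolding q2 eS using t2 u by linarith
  from r1 r2 show ?thesis using Spos by (simp add: mult_le_cancel_right)
qed

lemma nn_integral_PiM_blocks:
  fixes J :: "'b \<Rightarrow> 'a set" and f :: "'b \<Rightarrow> ('a \<Rightarrow> real) \<Rightarrow> ennreal"
  assumes "finite B" "\<And>\<beta>. \<beta> \<in> B \<Longrightarrow> finite (J \<beta>)" "disjoint_family_on J B"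
    "\<And>\<beta>. \<beta> \<in> B \<Longrightarrow> f \<beta> \<in> borel_measurable (PiM (J \<beta>) (\<lambda>_. lborel))"
  shows "(\<integral>\<^sup>+x. (\<Prod>\<beta>\<in>B. f \<beta> (restrict x (J \<beta>))) \<partial>PiM (\<Union>\<beta>\<in>B. J \<beta>) (\<lambda>_. lborel))
     = (\<Prod>\<beta>\<in>B. \<integral>\<^sup>+y. f \<beta> y \<partial>PiM (J \<beta>) (\<lambda>_. lborel))"
  using assms
proof (induction B rule: finite_induct)
  case empty
  show ?case by (simp add: PiM_empty nn_integral_count_space_finite)
next
  case (insert \<beta> B)
  interpret product_sigma_finite "\<lambda>_. lborel" by standard
  let ?U = "\<Union>\<beta>\<in>B. J \<beta>"
  have disj: "J \<beta> \<inter> ?U = {}"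
    using insert.prems(2) insert.hyps(2) unfolding disjoint_family_on_def by auto
  have finU: "finite ?U" using insert by auto
  have finb: "finite (J \<beta>)" using insert by auto
  have un: "(\<Union>\<beta>'\<in>insert \<beta> B. J \<beta>') = J \<beta> \<union> ?U" by auto
  have meas: "(\<lambda>x. \<Prod>\<beta>'\<in>insert \<beta> B. f \<beta>' (restrict x (J \<beta>'))) \<in> borel_measurable (PiM (J \<beta> \<union> ?U) (\<lambda>_. lborel))"
  proof (intro borel_measurable_prod_ennreal)
    fix \<gamma> assume g: "\<gamma> \<in> insert \<beta> B"
    have "(\<lambda>x. restrict x (J \<gamma>)) \<in> measurable (PiM (J \<beta> \<union> ?U) (\<lambda>_. lborel)) (PiM (J \<gamma>) (\<lambda>_. lborel))"
      using g by (intro measurable_restrict_subset) auto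
    from measurable_comp[OF this insert.prems(3)[OF g]] show "(\<lambda>x. f \<gamma> (restrict x (J \<gamma>))) \<in> borel_measurable (PiM (J \<beta> \<union> ?U) (\<lambda>_. lborel))"
      by (simp add: comp_def)
  qed
  have IH: "(\<integral>\<^sup>+x. (\<Prod>\<beta>\<in>B. f \<beta> (restrict x (J \<beta>))) \<partial>PiM ?U (\<lambda>_. lborel))
     = (\<Prod>\<beta>\<in>B. \<integral>\<^sup>+y. f \<beta> y \<partial>PiM (J \<beta>) (\<lambda>_. lborel))"
    using insert by (intro insert.IH) (auto simp: disjoint_family_on_def)
  have measB: "(\<lambda>y. \<Prod>\<beta>'\<in>B. f \<beta>' (restrict y (J \<beta>'))) \<in> borel_measurable (PiM ?U (\<lambda>_. lborel))"
  proof (intro borel_measurable_prod_ennreal)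
    fix \<gamma> assume g: "\<gamma> \<in> B"
    have "(\<lambda>x. restrict x (J \<gamma>)) \<in> measurable (PiM ?U (\<lambda>_. lborel)) (PiM (J \<gamma>) (\<lambda>_. lborel))"
      using g by (intro measurable_restrict_subset) auto
    from measurable_comp[OF this insert.prems(3)] show "(\<lambda>x. f \<gamma> (restrict x (J \<gamma>))) \<in> borel_measurable (PiM ?U (\<lambda>_. lborel))"
      using g by (simp add: comp_def)
  qed
  have "(\<integral>\<^sup>+x. (\<Prod>\<beta>'\<in>insert \<beta> B. f \<beta>' (restrict x (J \<beta>'))) \<partial>PiM (\<Union>\<beta>'\<in>insert \<beta> B. J \<beta>') (\<lambda>_. lborel))
    = (\<integral>\<^sup>+x. (\<integral>\<^sup>+y. (\<Prod>\<beta>'\<in>insert \<beta> B. f \<beta>' (restrict (merge (J \<beta>) ?U (x,y)) (J \<beta>'))) \<partial>PiM ?U (\<lambda>_. lborel)) \<partial>PiM (J \<beta>) (\<lambda>_. lborel))"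
    unfolding un by (rule product_nn_integral_fold[OF disj finb finU meas])
  also have "\<dots> = (\<integral>\<^sup>+x. (\<integral>\<^sup>+y. f \<beta> x * (\<Prod>\<beta>'\<in>B. f \<beta>' (restrict y (J \<beta>'))) \<partial>PiM ?U (\<lambda>_. lborel)) \<partial>PiM (J \<beta>) (\<lambda>_. lborel))"
  proof (intro nn_integral_cong)
    fix x y :: "'a \<Rightarrow> real" assume x: "x \<in> space (PiM (J \<beta>) (\<lambda>_. lborel))" and y: "y \<in> space (PiM ?U (\<lambda>_. lborel))"
    have rx: "restrict (merge (J \<beta>) ?U (x,y)) (J \<beta>) = x"
      using disj x by (simp add: space_PiM restrict_PiE)
    have ry: "restrict (merge (J \<beta>) ?U (x,y)) (J \<beta>') = restrict y (J \<beta>')" if "\<beta>' \<in> B" for \<beta>'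
      using disj that by (intro ext) (auto simp: restrict_def merge_def)
    show "(\<Prod>\<beta>'\<in>insert \<beta> B. f \<beta>' (restrict (merge (J \<beta>) ?U (x,y)) (J \<beta>'))) = f \<beta> x * (\<Prod>\<beta>'\<in>B. f \<beta>' (restrict y (J \<beta>')))"
      using insert.hyps by (simp add: rx ry cong: prod.cong)
  qed
  also have "\<dots> = (\<integral>\<^sup>+x. f \<beta> x * (\<Prod>\<beta>\<in>B. \<integral>\<^sup>+y. f \<beta> y \<partial>PiM (J \<beta>) (\<lambda>_. lborel)) \<partial>PiM (J \<beta>) (\<lambda>_. lborel))"
    by (intro nn_integral_cong) (simp add: nn_integral_cmult measB IH)
  also have "\<dots> = (\<integral>\<^sup>+x. f \<beta> x \<partial>PiM (J \<beta>) (\<lambda>_. lborel)) * (\<Prod>\<beta>\<in>B. \<integral>\<^sup>+y. f \<beta> y \<partial>PiM (J \<beta>) (\<lambda>_. lborel))"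
    using insert.prems(3) by (intro nn_integral_multc) auto
  finally show ?case by (simp only: prod.insert[OF insert.hyps])
qed

lemma nn_int_gauss:
  assumes "\<sigma> > 0"
  shows "(\<integral>\<^sup>+u. ennreal (exp (-(u - \<mu>)\<^sup>2 / (2 * \<sigma>\<^sup>2))) \<partial>lborel) = ennreal (sqrt (2 * pi * \<sigma>\<^sup>2))"
proof -
  have n1: "(\<integral>\<^sup>+u. ennreal (normal_density \<mu> \<sigma> u) \<partial>lborel) = 1"
    using assms by (subst nn_integral_eq_integral) (auto intro: integrable_normal_density integral_normal_density)
  have pos: "sqrt (2 * pi * \<sigma>\<^sup>2) > 0" using assms by simp
  have "(\<integral>\<^sup>+u. ennreal (exp (-(u - \<mu>)\<^sup>2 / (2 * \<sigma>\<^sup>2))) \<partial>lborel)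
      = (\<integral>\<^sup>+u. ennreal (sqrt (2 * pi * \<sigma>\<^sup>2)) * ennreal (normal_density \<mu> \<sigma> u) \<partial>lborel)"
    using pos assms by (intro nn_integral_cong) (simp add: normal_density_def ennreal_mult[symmetric])
  also have "\<dots> = ennreal (sqrt (2 * pi * \<sigma>\<^sup>2))"
    by (subst nn_integral_cmult) (auto simp: n1)
  finally show ?thesis .
qed

lemma nn_int_gauss_shift:
  "(\<integral>\<^sup>+u. ennreal (exp (-(1/2) * (u + m)\<^sup>2)) \<partial>lborel) = ennreal (sqrt (2 * pi))"
  using nn_int_gauss[of 1 "-m"] by (simp add: field_simps)

lemma nn_int_gauss_scale:
  assumes "c > 0"
  shows "(\<integral>\<^sup>+u. ennreal (exp (-(c/2) * u\<^sup>2)) \<partial>lborel) = ennreal (sqrt (2 * pi / c))"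
proof -
  have "sqrt (1/c) > 0" using assms by simp
  from nn_int_gauss[OF this, of 0] show ?thesis using assms
    by (simp add: field_simps power2_eq_square real_sqrt_mult)
qed

lemma prod_block:
  fixes e :: "nat \<Rightarrow> 'a" and \<phi> :: "nat \<Rightarrow> real \<Rightarrow> real"
  assumes inj: "inj_on e L" and fin: "finite L"
    and nn: "\<And>l v. 0 \<le> \<phi> l v" and meas: "\<And>l. \<phi> l \<in> borel_measurable borel"
  shows "(\<integral>\<^sup>+x. ennreal (\<Prod>l\<in>L. \<phi> l (x (e l))) \<partial>PiM (e ` L) (\<lambda>_. lborel))
     = (\<Prod>l\<in>L. \<integral>\<^sup>+v. ennreal (\<phi> l v) \<partial>lborel)"
proof -
  interpret product_sigma_finite "\<lambda>_. lborel" by standard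
  define g where "g = (\<lambda>\<kappa> v. ennreal (\<phi> (the_inv_into L e \<kappa>) v))"
  have "(\<integral>\<^sup>+x. ennreal (\<Prod>l\<in>L. \<phi> l (x (e l))) \<partial>PiM (e ` L) (\<lambda>_. lborel))
      = (\<integral>\<^sup>+x. (\<Prod>\<kappa>\<in>e ` L. g \<kappa> (x \<kappa>)) \<partial>PiM (e ` L) (\<lambda>_. lborel))"
  proof (intro nn_integral_cong)
    fix x :: "'a \<Rightarrow> real"
    have "ennreal (\<Prod>l\<in>L. \<phi> l (x (e l))) = (\<Prod>l\<in>L. ennreal (\<phi> l (x (e l))))"
      using nn by (simp add: prod_ennreal)
    also have "\<dots> = (\<Prod>l\<in>L. g (e l) (x (e l)))"
      using inj by (intro prod.cong) (auto simp: g_def the_inv_into_f_f)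
    also have "\<dots> = (\<Prod>\<kappa>\<in>e ` L. g \<kappa> (x \<kappa>))"
      using inj by (simp add: prod.reindex)
    finally show "ennreal (\<Prod>l\<in>L. \<phi> l (x (e l))) = (\<Prod>\<kappa>\<in>e ` L. g \<kappa> (x \<kappa>))" .
  qed
  also have "\<dots> = (\<Prod>\<kappa>\<in>e ` L. integral\<^sup>N lborel (g \<kappa>))"
    using fin meas by (intro product_nn_integral_prod) (auto simp: g_def)
  also have "\<dots> = (\<Prod>l\<in>L. integral\<^sup>N lborel (g (e l)))"
    using inj by (simp add: prod.reindex)
  also have "\<dots> = (\<Prod>l\<in>L. \<integral>\<^sup>+v. ennreal (\<phi> l v) \<partial>lborel)"
    using inj by (intro prod.cong) (auto simp: g_def the_inv_into_f_f)
  finally show ?thesis .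
qed

lemma block_split:
  fixes e :: "nat \<Rightarrow> 'a"
  assumes inj: "inj_on e {..<p}" and ab: "a < p" "b < p" "a \<noteq> b"
    and meas: "f \<in> borel_measurable (PiM (e ` {..<p}) (\<lambda>_. lborel))"
  shows "(\<integral>\<^sup>+y. f y \<partial>PiM (e ` {..<p}) (\<lambda>_. lborel))
    = (\<integral>\<^sup>+x. (\<integral>\<^sup>+u. f (x(e a := u)) \<partial>lborel) \<partial>PiM (e ` ({..<p} - {a})) (\<lambda>_. lborel))"
proof -
  interpret product_sigma_finite "\<lambda>_. lborel" by standard
  have K: "e ` {..<p} = insert (e a) (e ` ({..<p} - {a}))" using ab by auto
  have nin: "e a \<notin> e ` ({..<p} - {a})" using inj ab by (auto simp: inj_on_def)
  show ?thesis using meas unfolding K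
    by (intro product_nn_integral_insert) (use nin in auto)
qed

lemma upd_eval:
  assumes inj: "inj_on e {..<p}" "l < p" "a < p"
  shows "(x(e a := u)) (e l) = (if l = a then u else x (e l))"
  using assms by (auto simp: inj_on_def)

lemma sum_split_a:
  fixes e :: "nat \<Rightarrow> 'a"
  assumes inj: "inj_on e {..<p}" and ab: "a < p" "b < p" "a \<noteq> b"
  shows "(\<Sum>l<p. ((x(e a := u)) (e l) + (if l = a then \<gamma> * (x(e a := u)) (e b) else 0))\<^sup>2)
     = (u + \<gamma> * x (e b))\<^sup>2 + (\<Sum>l\<in>{..<p} - {a}. (x (e l))\<^sup>2)"
    and "(\<Sum>l<p. ((x(e a := u)) (e l))\<^sup>2) = u\<^sup>2 + (\<Sum>l\<in>{..<p} - {a}. (x (e l))\<^sup>2)"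
proof -
  have eb: "(x(e a := u)) (e b) = x (e b)" using inj ab by (auto simp: inj_on_def)
  have "(\<Sum>l<p. ((x(e a := u)) (e l) + (if l = a then \<gamma> * (x(e a := u)) (e b) else 0))\<^sup>2)
     = ((x(e a := u)) (e a) + \<gamma> * (x(e a := u)) (e b))\<^sup>2 + (\<Sum>l\<in>{..<p} - {a}. ((x(e a := u)) (e l) + (if l = a then \<gamma> * (x(e a := u)) (e b) else 0))\<^sup>2)"
    using ab by (subst sum.remove[of _ a]) auto
  also have "(\<Sum>l\<in>{..<p} - {a}. ((x(e a := u)) (e l) + (if l = a then \<gamma> * (x(e a := u)) (e b) else 0))\<^sup>2)
     = (\<Sum>l\<in>{..<p} - {a}. (x (e l))\<^sup>2)"
    using ab inj by (intro sum.cong) (auto simp: inj_on_def)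
  finally show "(\<Sum>l<p. ((x(e a := u)) (e l) + (if l = a then \<gamma> * (x(e a := u)) (e b) else 0))\<^sup>2)
     = (u + \<gamma> * x (e b))\<^sup>2 + (\<Sum>l\<in>{..<p} - {a}. (x (e l))\<^sup>2)" using eb by simp
  have "(\<Sum>l<p. ((x(e a := u)) (e l))\<^sup>2) = ((x(e a := u)) (e a))\<^sup>2 + (\<Sum>l\<in>{..<p} - {a}. ((x(e a := u)) (e l))\<^sup>2)"
    using ab by (subst sum.remove[of _ a]) auto
  also have "(\<Sum>l\<in>{..<p} - {a}. ((x(e a := u)) (e l))\<^sup>2) = (\<Sum>l\<in>{..<p} - {a}. (x (e l))\<^sup>2)"
    using ab inj by (intro sum.cong) (auto simp: inj_on_def)
  finally show "(\<Sum>l<p. ((x(e a := u)) (e l))\<^sup>2) = u\<^sup>2 + (\<Sum>l\<in>{..<p} - {a}. (x (e l))\<^sup>2)" by simp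
qed

lemma gauss_block1:
  fixes e :: "nat \<Rightarrow> 'a"
  assumes inj: "inj_on e {..<p}" and ab: "a < p" "b < p" "a \<noteq> b"
  shows "(\<integral>\<^sup>+y. ennreal (exp (-(1/2) * (\<Sum>l<p. (y (e l) + (if l = a then \<gamma> * y (e b) else 0))\<^sup>2)))
      \<partial>PiM (e ` {..<p}) (\<lambda>_. lborel)) = ennreal (sqrt (2*pi) ^ p)"
proof -
  let ?L = "{..<p} - {a}"
  have injL: "inj_on e ?L" using inj by (rule inj_on_subset) auto
  have "(\<integral>\<^sup>+y. ennreal (exp (-(1/2) * (\<Sum>l<p. (y (e l) + (if l = a then \<gamma> * y (e b) else 0))\<^sup>2)))
      \<partial>PiM (e ` {..<p}) (\<lambda>_. lborel))
    = (\<integral>\<^sup>+x. (\<integral>\<^sup>+u. ennreal (exp (-(1/2) * (\<Sum>l<p. ((x(e a := u)) (e l) + (if l = a then \<gamma> * (x(e a := u)) (e b) else 0))\<^sup>2))) \<partial>lborel) \<partial>PiM (e ` ?L) (\<lambda>_. lborel))"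
    using ab by (intro block_split[OF inj ab]) measurable
  also have "\<dots> = (\<integral>\<^sup>+x. ennreal (exp (-(1/2) * (\<Sum>l\<in>?L. (x (e l))\<^sup>2))) * ennreal (sqrt (2*pi)) \<partial>PiM (e ` ?L) (\<lambda>_. lborel))"
  proof (intro nn_integral_cong)
    fix x :: "'a \<Rightarrow> real"
    have "(\<integral>\<^sup>+u. ennreal (exp (-(1/2) * (\<Sum>l<p. ((x(e a := u)) (e l) + (if l = a then \<gamma> * (x(e a := u)) (e b) else 0))\<^sup>2))) \<partial>lborel)
      = (\<integral>\<^sup>+u. ennreal (exp (-(1/2) * (\<Sum>l\<in>?L. (x (e l))\<^sup>2))) * ennreal (exp (-(1/2) * (u + \<gamma> * x (e b))\<^sup>2)) \<partial>lborel)"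
      by (intro nn_integral_cong) (simp only: sum_split_a[OF inj ab], simp add: ennreal_mult[symmetric] exp_add[symmetric] algebra_simps)
    also have "\<dots> = ennreal (exp (-(1/2) * (\<Sum>l\<in>?L. (x (e l))\<^sup>2))) * ennreal (sqrt (2*pi))"
      using nn_int_gauss_shift[of "\<gamma> * x (e b)"] by (subst nn_integral_cmult) auto
    finally show "(\<integral>\<^sup>+u. ennreal (exp (-(1/2) * (\<Sum>l<p. ((x(e a := u)) (e l) + (if l = a then \<gamma> * (x(e a := u)) (e b) else 0))\<^sup>2))) \<partial>lborel)
      = ennreal (exp (-(1/2) * (\<Sum>l\<in>?L. (x (e l))\<^sup>2))) * ennreal (sqrt (2*pi))" .
  qed
  also have "\<dots> = (\<integral>\<^sup>+x. ennreal (exp (-(1/2) * (\<Sum>l\<in>?L. (x (e l))\<^sup>2))) \<partial>PiM (e ` ?L) (\<lambda>_. lborel)) * ennreal (sqrt (2*pi))"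
    using injL by (intro nn_integral_multc) measurable
  also have "(\<integral>\<^sup>+x. ennreal (exp (-(1/2) * (\<Sum>l\<in>?L. (x (e l))\<^sup>2))) \<partial>PiM (e ` ?L) (\<lambda>_. lborel))
     = (\<integral>\<^sup>+x. ennreal (\<Prod>l\<in>?L. exp (-(1/2) * (x (e l))\<^sup>2)) \<partial>PiM (e ` ?L) (\<lambda>_. lborel))"
    by (intro nn_integral_cong) (simp add: exp_sum[symmetric] sum_distrib_left)
  also have "\<dots> = (\<Prod>l\<in>?L. \<integral>\<^sup>+v. ennreal (exp (-(1/2) * v\<^sup>2)) \<partial>lborel)"
    by (rule prod_block[OF injL]) auto
  also have "\<dots> = (\<Prod>l\<in>?L. ennreal (sqrt (2*pi)))"
    using nn_int_gauss_shift[of 0] by simp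
  also have "\<dots> = ennreal (sqrt (2*pi) ^ (p - 1))"
    using ab by (simp add: prod_ennreal card_Diff_singleton ennreal_power)
  also have "ennreal (sqrt (2*pi) ^ (p - 1)) * ennreal (sqrt (2*pi)) = ennreal (sqrt (2*pi) ^ p)"
  proof -
    have "sqrt (2 * pi) ^ (p - 1) * sqrt (2 * pi) = sqrt (2 * pi) ^ p"
      using ab by (metis Suc_diff_1 gr_implies_not0 neq0_conv power_Suc2)
    then show ?thesis by (simp add: ennreal_mult[symmetric])
  qed
  finally show ?thesis .
qed

lemma gauss_block2:
  fixes e :: "nat \<Rightarrow> 'a"
  assumes inj: "inj_on e {..<p}" and ab: "a < p" "b < p" "a \<noteq> b" and g: "2 * \<gamma>\<^sup>2 < 1"
  shows "(\<integral>\<^sup>+y. ennreal (exp (-(\<Sum>l<p. (y (e l) + (if l = a then \<gamma> * y (e b) else 0))\<^sup>2)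
        + (1/2) * (\<Sum>l<p. (y (e l))\<^sup>2)))
      \<partial>PiM (e ` {..<p}) (\<lambda>_. lborel)) = ennreal (sqrt (2*pi) ^ p / sqrt (1 - 2 * \<gamma>\<^sup>2))"
proof -
  let ?L = "{..<p} - {a}"
  define c where "c = 1 - 2 * \<gamma>\<^sup>2"
  have c: "c > 0" using g by (simp add: c_def)
  have injL: "inj_on e ?L" using inj by (rule inj_on_subset) auto
  define \<phi> where "\<phi> = (\<lambda>l w. if l = b then exp (-(c/2) * w\<^sup>2) else exp (-(1/2) * w\<^sup>2))"
  have "(\<integral>\<^sup>+y. ennreal (exp (-(\<Sum>l<p. (y (e l) + (if l = a then \<gamma> * y (e b) else 0))\<^sup>2)
        + (1/2) * (\<Sum>l<p. (y (e l))\<^sup>2))) \<partial>PiM (e ` {..<p}) (\<lambda>_. lborel))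
    = (\<integral>\<^sup>+x. (\<integral>\<^sup>+u. ennreal (exp (-(\<Sum>l<p. ((x(e a := u)) (e l) + (if l = a then \<gamma> * (x(e a := u)) (e b) else 0))\<^sup>2)
        + (1/2) * (\<Sum>l<p. ((x(e a := u)) (e l))\<^sup>2))) \<partial>lborel) \<partial>PiM (e ` ?L) (\<lambda>_. lborel))"
    using ab by (intro block_split[OF inj ab]) measurable
  also have "\<dots> = (\<integral>\<^sup>+x. ennreal (exp (\<gamma>\<^sup>2 * (x (e b))\<^sup>2 - (1/2) * (\<Sum>l\<in>?L. (x (e l))\<^sup>2))) * ennreal (sqrt (2*pi)) \<partial>PiM (e ` ?L) (\<lambda>_. lborel))"
  proof (intro nn_integral_cong)
    fix x :: "'a \<Rightarrow> real"
    have "(\<integral>\<^sup>+u. ennreal (exp (-(\<Sum>l<p. ((x(e a := u)) (e l) + (if l = a then \<gamma> * (x(e a := u)) (e b) else 0))\<^sup>2)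
        + (1/2) * (\<Sum>l<p. ((x(e a := u)) (e l))\<^sup>2))) \<partial>lborel)
      = (\<integral>\<^sup>+u. ennreal (exp (\<gamma>\<^sup>2 * (x (e b))\<^sup>2 - (1/2) * (\<Sum>l\<in>?L. (x (e l))\<^sup>2))) * ennreal (exp (-(1/2) * (u + 2 * \<gamma> * x (e b))\<^sup>2)) \<partial>lborel)"
      by (intro nn_integral_cong) (simp only: sum_split_a[OF inj ab], simp add: ennreal_mult[symmetric] exp_add[symmetric] algebra_simps power2_eq_square)
    also have "\<dots> = ennreal (exp (\<gamma>\<^sup>2 * (x (e b))\<^sup>2 - (1/2) * (\<Sum>l\<in>?L. (x (e l))\<^sup>2))) * ennreal (sqrt (2*pi))"
      using nn_int_gauss_shift[of "2 * \<gamma> * x (e b)"] by (subst nn_integral_cmult) auto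
    finally show "(\<integral>\<^sup>+u. ennreal (exp (-(\<Sum>l<p. ((x(e a := u)) (e l) + (if l = a then \<gamma> * (x(e a := u)) (e b) else 0))\<^sup>2)
        + (1/2) * (\<Sum>l<p. ((x(e a := u)) (e l))\<^sup>2))) \<partial>lborel)
      = ennreal (exp (\<gamma>\<^sup>2 * (x (e b))\<^sup>2 - (1/2) * (\<Sum>l\<in>?L. (x (e l))\<^sup>2))) * ennreal (sqrt (2*pi))" .
  qed
  also have "\<dots> = (\<integral>\<^sup>+x. ennreal (exp (\<gamma>\<^sup>2 * (x (e b))\<^sup>2 - (1/2) * (\<Sum>l\<in>?L. (x (e l))\<^sup>2))) \<partial>PiM (e ` ?L) (\<lambda>_. lborel)) * ennreal (sqrt (2*pi))"
    using injL ab by (intro nn_integral_multc) measurable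
  also have "(\<integral>\<^sup>+x. ennreal (exp (\<gamma>\<^sup>2 * (x (e b))\<^sup>2 - (1/2) * (\<Sum>l\<in>?L. (x (e l))\<^sup>2))) \<partial>PiM (e ` ?L) (\<lambda>_. lborel))
     = (\<integral>\<^sup>+x. ennreal (\<Prod>l\<in>?L. \<phi> l (x (e l))) \<partial>PiM (e ` ?L) (\<lambda>_. lborel))"
  proof (intro nn_integral_cong)
    fix x :: "'a \<Rightarrow> real"
    have bL: "b \<in> ?L" using ab by auto
    have "(\<Prod>l\<in>?L. \<phi> l (x (e l))) = exp (\<Sum>l\<in>?L. (if l = b then -(c/2) * (x (e l))\<^sup>2 else -(1/2) * (x (e l))\<^sup>2))"
      by (simp add: exp_sum \<phi>_def if_distrib cong: if_cong)
    also have "(\<Sum>l\<in>?L. (if l = b then -(c/2) * (x (e l))\<^sup>2 else -(1/2) * (x (e l))\<^sup>2))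
       = (\<Sum>l\<in>?L. -(1/2) * (x (e l))\<^sup>2 + (if l = b then \<gamma>\<^sup>2 * (x (e l))\<^sup>2 else 0))"
      by (intro sum.cong) (auto simp: c_def field_simps)
    also have "\<dots> = \<gamma>\<^sup>2 * (x (e b))\<^sup>2 - (1/2) * (\<Sum>l\<in>?L. (x (e l))\<^sup>2)"
      using bL by (simp only: sum.distrib sum.delta' sum_distrib_left[symmetric] finite_Diff finite_lessThan) simp
    finally show "ennreal (exp (\<gamma>\<^sup>2 * (x (e b))\<^sup>2 - (1/2) * (\<Sum>l\<in>?L. (x (e l))\<^sup>2))) = ennreal (\<Prod>l\<in>?L. \<phi> l (x (e l)))" by simp
  qed
  also have "\<dots> = (\<Prod>l\<in>?L. \<integral>\<^sup>+v. ennreal (\<phi> l v) \<partial>lborel)"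
    by (rule prod_block[OF injL]) (auto simp: \<phi>_def)
  also have "\<dots> = (\<Prod>l\<in>?L. ennreal (if l = b then sqrt (2*pi/c) else sqrt (2*pi)))"
    using nn_int_gauss_shift[of 0] nn_int_gauss_scale[OF c] by (intro prod.cong) (auto simp: \<phi>_def)
  also have "\<dots> = ennreal (\<Prod>l\<in>?L. (if l = b then sqrt (2*pi/c) else sqrt (2*pi)))"
    using c by (intro prod_ennreal) auto
  also have "(\<Prod>l\<in>?L. (if l = b then sqrt (2*pi/c) else sqrt (2*pi))) = sqrt (2*pi/c) * sqrt (2*pi) ^ (p - 2)"
  proof -
    have "(\<Prod>l\<in>?L. (if l = b then sqrt (2*pi/c) else sqrt (2*pi))) = sqrt (2*pi/c) * (\<Prod>l\<in>?L - {b}. (if l = b then sqrt (2*pi/c) else sqrt (2*pi)))"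
      using ab by (subst prod.remove[of _ b]) auto
    also have "(\<Prod>l\<in>?L - {b}. (if l = b then sqrt (2*pi/c) else sqrt (2*pi))) = (\<Prod>l\<in>?L - {b}. sqrt (2*pi))"
      by (intro prod.cong) auto
    also have "\<dots> = sqrt (2*pi) ^ (p - 2)"
      using ab by (simp add: card_Diff_singleton Diff_insert2[symmetric] numeral_2_eq_2)
    finally show ?thesis .
  qed
  also have "ennreal (sqrt (2*pi/c) * sqrt (2*pi) ^ (p - 2)) * ennreal (sqrt (2*pi)) = ennreal (sqrt (2*pi) ^ p / sqrt (1 - 2 * \<gamma>\<^sup>2))"
  proof -
    have p2: "p = Suc (Suc (p - 2))" using ab by linarith
    have "sqrt (2*pi/c) * sqrt (2*pi) ^ (p - 2) * sqrt (2*pi) = sqrt (2*pi) ^ p / sqrt (1 - 2 * \<gamma>\<^sup>2)"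
      using c by (subst (2) p2) (simp add: c_def real_sqrt_divide field_simps)
    then show ?thesis using c by (subst ennreal_mult[symmetric]) auto
  qed
  finally show ?thesis .
qed

lemma data_integral:
  fixes h :: "nat \<Rightarrow> (nat \<Rightarrow> real) \<Rightarrow> real"
  assumes meas: "\<And>t (i::nat). (\<lambda>y::nat\<times>nat\<times>nat\<Rightarrow>real. ennreal (h t (\<lambda>j. y (t,i,j)))) \<in> borel_measurable (PiM ((\<lambda>j. (t,i,j)) ` {..<p}) (\<lambda>_. lborel))"
    and cong: "\<And>t y z. (\<And>j. j < p \<Longrightarrow> y j = z j) \<Longrightarrow> h t y = h t z"
    and nn: "\<And>t y. 0 \<le> h t y"
  shows "(\<integral>\<^sup>+x. ennreal (\<Prod>t<k. \<Prod>i<n t. h t (\<lambda>j. x (t,i,j))) \<partial>data_space p k n)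
    = (\<Prod>t<k. \<Prod>i<n t. \<integral>\<^sup>+y. ennreal (h t (\<lambda>j. y (t,i,j))) \<partial>PiM ((\<lambda>j. (t,i,j)) ` {..<p}) (\<lambda>_. lborel))"
proof -
  define B where "B = Sigma {..<k} (\<lambda>t. {..<n t})"
  define J where "J = (\<lambda>\<beta>::nat\<times>nat. (\<lambda>j. (fst \<beta>, snd \<beta>, j)) ` {..<p})"
  define f where "f = (\<lambda>\<beta>::nat\<times>nat. \<lambda>y. ennreal (h (fst \<beta>) (\<lambda>j. y (fst \<beta>, snd \<beta>, j))))"
  have idx: "data_idx p k n = (\<Union>\<beta>\<in>B. J \<beta>)"
    by (auto simp: data_idx_def B_def J_def)
  have finB: "finite B" by (simp add: B_def)
  have "(\<integral>\<^sup>+x. ennreal (\<Prod>t<k. \<Prod>i<n t. h t (\<lambda>j. x (t,i,j))) \<partial>data_space p k n)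
     = (\<integral>\<^sup>+x. (\<Prod>\<beta>\<in>B. f \<beta> (restrict x (J \<beta>))) \<partial>PiM (\<Union>\<beta>\<in>B. J \<beta>) (\<lambda>_. lborel))"
    unfolding data_space_def idx
  proof (intro nn_integral_cong)
    fix x :: "nat \<times> nat \<times> nat \<Rightarrow> real"
    have "ennreal (\<Prod>t<k. \<Prod>i<n t. h t (\<lambda>j. x (t,i,j))) = (\<Prod>t<k. \<Prod>i<n t. ennreal (h t (\<lambda>j. x (t,i,j))))"
      using nn by (simp add: prod_ennreal prod_nonneg)
    also have "\<dots> = (\<Prod>\<beta>\<in>B. ennreal (h (fst \<beta>) (\<lambda>j. x (fst \<beta>, snd \<beta>, j))))"
      unfolding B_def by (subst prod.Sigma) (auto simp: case_prod_beta)
    also have "\<dots> = (\<Prod>\<beta>\<in>B. f \<beta> (restrict x (J \<beta>)))"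
      unfolding f_def J_def by (intro prod.cong refl arg_cong[where f=ennreal] cong) auto
    finally show "ennreal (\<Prod>t<k. \<Prod>i<n t. h t (\<lambda>j. x (t,i,j))) = (\<Prod>\<beta>\<in>B. f \<beta> (restrict x (J \<beta>)))" .
  qed
  also have "\<dots> = (\<Prod>\<beta>\<in>B. \<integral>\<^sup>+y. f \<beta> y \<partial>PiM (J \<beta>) (\<lambda>_. lborel))"
  proof (rule nn_integral_PiM_blocks[OF finB])
    show "\<And>\<beta>. \<beta> \<in> B \<Longrightarrow> finite (J \<beta>)" by (simp add: J_def)
    show "disjoint_family_on J B" by (auto simp: disjoint_family_on_def J_def)
    fix \<beta> show "f \<beta> \<in> borel_measurable (PiM (J \<beta>) (\<lambda>_. lborel))"
      unfolding f_def J_def using meas[of "fst \<beta>" "snd \<beta>"] by simp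
  qed
  also have "\<dots> = (\<Prod>t<k. \<Prod>i<n t. \<integral>\<^sup>+y. ennreal (h t (\<lambda>j. y (t,i,j))) \<partial>PiM ((\<lambda>j. (t,i,j)) ` {..<p}) (\<lambda>_. lborel))"
    unfolding B_def f_def J_def by (subst prod.Sigma) (auto simp: case_prod_beta)
  finally show ?thesis .
qed

definition kap :: "nat \<Rightarrow> real" where "kap p = (2 * pi) powr (- (real p / 2))"

lemma kap_pos: "kap p > 0" by (simp add: kap_def)

lemma kap_sqrt: "kap p * sqrt (2 * pi) ^ p = 1"
proof -
  have "sqrt (2 * pi) ^ p = (2 * pi) powr (real p / 2)"
  proof -
    have "sqrt (2 * pi) ^ p = ((2 * pi) powr (1/2)) ^ p" by (simp add: powr_half_sqrt)
    also have "\<dots> = (2 * pi) powr (1/2 * real p)" by (simp add: powr_power)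
    finally show ?thesis by simp
  qed
  then show ?thesis by (simp add: kap_def powr_add[symmetric])
qed

lemma gauss_dens_Omd:
  assumes "a < p" "b < p" "a \<noteq> b"
  shows "gauss_dens p (Omd p a b d) y = kap p * exp (-(1/2) * (\<Sum>l<p. (y l + (if l = a then d * y b else 0))\<^sup>2))"
  using assms by (simp add: gauss_dens_def det_Omd Omd_quad kap_def)

lemma block_int1:
  assumes ab: "a < p" "b < p" "a \<noteq> b"
  shows "(\<integral>\<^sup>+y. ennreal (gauss_dens p (Omd p a b d) (\<lambda>j. y (t,i,j))) \<partial>PiM ((\<lambda>j. (t,i,j)) ` {..<p}) (\<lambda>_. lborel)) = 1"
proof -
  have inj: "inj_on (\<lambda>j::nat. (t,i,j)) {..<p}" by (auto simp: inj_on_def)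
  have "(\<integral>\<^sup>+y. ennreal (gauss_dens p (Omd p a b d) (\<lambda>j. y (t,i,j))) \<partial>PiM ((\<lambda>j. (t,i,j)) ` {..<p}) (\<lambda>_. lborel))
    = (\<integral>\<^sup>+y. ennreal (kap p) * ennreal (exp (-(1/2) * (\<Sum>l<p. (y (t,i,l) + (if l = a then d * y (t,i,b) else 0))\<^sup>2))) \<partial>PiM ((\<lambda>j. (t,i,j)) ` {..<p}) (\<lambda>_. lborel))"
    using kap_pos[of p] by (intro nn_integral_cong) (simp add: gauss_dens_Omd[OF ab] ennreal_mult)
  also have "\<dots> = ennreal (kap p) * (\<integral>\<^sup>+y. ennreal (exp (-(1/2) * (\<Sum>l<p. (y (t,i,l) + (if l = a then d * y (t,i,b) else 0))\<^sup>2))) \<partial>PiM ((\<lambda>j. (t,i,j)) ` {..<p}) (\<lambda>_. lborel))"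
    using ab by (intro nn_integral_cmult) measurable
  also have "\<dots> = ennreal (kap p) * ennreal (sqrt (2*pi) ^ p)"
    using gauss_block1[OF inj ab, of d] by simp
  also have "\<dots> = 1" using kap_sqrt[of p] kap_pos[of p] by (simp add: ennreal_mult[symmetric])
  finally show ?thesis .
qed

lemma chi_pointwise:
  assumes ab: "a < p" "b < p" "a \<noteq> b"
  shows "(gauss_dens p (Omd p a b d) y)\<^sup>2 / gauss_dens p (Omd p a b 0) y
     = kap p * exp (-(\<Sum>l<p. (y l + (if l = a then d * y b else 0))\<^sup>2) + (1/2) * (\<Sum>l<p. (y l)\<^sup>2))"
proof -
  have k: "kap p > 0" by (rule kap_pos)
  have "(gauss_dens p (Omd p a b d) y)\<^sup>2 = (kap p)\<^sup>2 * exp (-(\<Sum>l<p. (y l + (if l = a then d * y b else 0))\<^sup>2))"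
    using ab by (simp add: gauss_dens_Omd power_mult_distrib exp_double[symmetric])
  moreover have "gauss_dens p (Omd p a b 0) y = kap p * exp (-(1/2) * (\<Sum>l<p. (y l)\<^sup>2))"
    using ab by (simp add: gauss_dens_Omd cong: if_cong)
  ultimately show ?thesis using k
    by (simp add: power2_eq_square field_simps exp_add[symmetric] exp_diff[symmetric])
qed

lemma block_int2:
  assumes ab: "a < p" "b < p" "a \<noteq> b" and g: "2 * d\<^sup>2 < 1"
  shows "(\<integral>\<^sup>+y. ennreal ((gauss_dens p (Omd p a b d) (\<lambda>j. y (t,i,j)))\<^sup>2 / gauss_dens p (Omd p a b 0) (\<lambda>j. y (t,i,j)))
     \<partial>PiM ((\<lambda>j. (t,i,j)) ` {..<p}) (\<lambda>_. lborel)) = ennreal (1 / sqrt (1 - 2 * d\<^sup>2))"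
proof -
  have inj: "inj_on (\<lambda>j::nat. (t,i,j)) {..<p}" by (auto simp: inj_on_def)
  have "(\<integral>\<^sup>+y. ennreal ((gauss_dens p (Omd p a b d) (\<lambda>j. y (t,i,j)))\<^sup>2 / gauss_dens p (Omd p a b 0) (\<lambda>j. y (t,i,j)))
     \<partial>PiM ((\<lambda>j. (t,i,j)) ` {..<p}) (\<lambda>_. lborel))
    = (\<integral>\<^sup>+y. ennreal (kap p) * ennreal (exp (-(\<Sum>l<p. (y (t,i,l) + (if l = a then d * y (t,i,b) else 0))\<^sup>2) + (1/2) * (\<Sum>l<p. (y (t,i,l))\<^sup>2))) \<partial>PiM ((\<lambda>j. (t,i,j)) ` {..<p}) (\<lambda>_. lborel))"
    using kap_pos[of p] by (intro nn_integral_cong) (simp add: chi_pointwise[OF ab] ennreal_mult)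
  also have "\<dots> = ennreal (kap p) * (\<integral>\<^sup>+y. ennreal (exp (-(\<Sum>l<p. (y (t,i,l) + (if l = a then d * y (t,i,b) else 0))\<^sup>2) + (1/2) * (\<Sum>l<p. (y (t,i,l))\<^sup>2))) \<partial>PiM ((\<lambda>j. (t,i,j)) ` {..<p}) (\<lambda>_. lborel))"
    using ab by (intro nn_integral_cmult) measurable
  also have "\<dots> = ennreal (kap p) * ennreal (sqrt (2*pi) ^ p / sqrt (1 - 2 * d\<^sup>2))"
    using gauss_block2[OF inj ab g] by simp
  also have "\<dots> = ennreal (1 / sqrt (1 - 2 * d\<^sup>2))"
    using kap_sqrt[of p] kap_pos[of p] g
    by (subst ennreal_mult[symmetric]) (auto simp: field_simps)
  finally show ?thesis .
qed

lemma gauss_dens_cong: "(\<And>j. j < p \<Longrightarrow> y j = z j) \<Longrightarrow> gauss_dens p Om y = gauss_dens p Om z"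
  unfolding gauss_dens_def by (intro arg_cong2[where f="(*)"] refl arg_cong[where f=exp] arg_cong2[where f="(*)"] sum.cong) auto

lemma gauss_dens_pos: "a < p \<Longrightarrow> b < p \<Longrightarrow> a \<noteq> b \<Longrightarrow> gauss_dens p (Omd p a b d) y > 0"
  by (simp add: gauss_dens_Omd kap_pos)

lemma data_int1:
  assumes ab: "a < p" "b < p" "a \<noteq> b"
  shows "(\<integral>\<^sup>+x. ennreal (\<Prod>t<k. \<Prod>i<n t. gauss_dens p (Omd p a b (g t)) (\<lambda>j. x (t,i,j))) \<partial>data_space p k n) = 1"
proof -
  have "(\<integral>\<^sup>+x. ennreal (\<Prod>t<k. \<Prod>i<n t. gauss_dens p (Omd p a b (g t)) (\<lambda>j. x (t,i,j))) \<partial>data_space p k n)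
    = (\<Prod>t<k. \<Prod>i<n t. \<integral>\<^sup>+y. ennreal (gauss_dens p (Omd p a b (g t)) (\<lambda>j. y (t,i,j))) \<partial>PiM ((\<lambda>j. (t,i,j)) ` {..<p}) (\<lambda>_. lborel))"
  proof (rule data_integral)
    fix t i :: nat
    have e: "(\<lambda>y::nat\<times>nat\<times>nat\<Rightarrow>real. ennreal (gauss_dens p (Omd p a b (g t)) (\<lambda>j. y (t,i,j))))
       = (\<lambda>y. ennreal (kap p * exp (-(1/2) * (\<Sum>l<p. (y (t,i,l) + (if l = a then g t * y (t,i,b) else 0))\<^sup>2))))"
      using ab by (simp add: gauss_dens_Omd)
    show "(\<lambda>y::nat\<times>nat\<times>nat\<Rightarrow>real. ennreal (gauss_dens p (Omd p a b (g t)) (\<lambda>j. y (t,i,j)))) \<in> borel_measurable (PiM ((\<lambda>j. (t,i,j)) ` {..<p}) (\<lambda>_. lborel))"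
      unfolding e apply measurable using ab by auto
  next
    fix t y z assume "\<And>j. j < p \<Longrightarrow> (y::nat\<Rightarrow>real) j = z j"
    then show "gauss_dens p (Omd p a b (g t)) y = gauss_dens p (Omd p a b (g t)) z" by (rule gauss_dens_cong)
  next
    fix t y show "0 \<le> gauss_dens p (Omd p a b (g t)) y" using gauss_dens_pos[OF ab] by (simp add: less_imp_le)
  qed
  also have "\<dots> = 1" by (simp add: block_int1[OF ab])
  finally show ?thesis .
qed

lemma data_int2:
  assumes ab: "a < p" "b < p" "a \<noteq> b" and g: "2 * \<delta>\<^sup>2 < 1" and xi: "\<And>t. t < k \<Longrightarrow> (xi t)\<^sup>2 = 1"
  shows "(\<integral>\<^sup>+x. ennreal ((\<Prod>t<k. \<Prod>i<n t. gauss_dens p (Omd p a b (xi t * \<delta>)) (\<lambda>j. x (t,i,j)))\<^sup>2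
      / (\<Prod>t<k. \<Prod>i<n t. gauss_dens p (Omd p a b 0) (\<lambda>j. x (t,i,j)))) \<partial>data_space p k n)
     = ennreal ((1 / sqrt (1 - 2 * \<delta>\<^sup>2)) ^ (\<Sum>t<k. n t))"
proof -
  define h where "h = (\<lambda>t y. (gauss_dens p (Omd p a b (xi t * \<delta>)) y)\<^sup>2 / gauss_dens p (Omd p a b 0) y)"
  have "(\<integral>\<^sup>+x. ennreal ((\<Prod>t<k. \<Prod>i<n t. gauss_dens p (Omd p a b (xi t * \<delta>)) (\<lambda>j. x (t,i,j)))\<^sup>2
      / (\<Prod>t<k. \<Prod>i<n t. gauss_dens p (Omd p a b 0) (\<lambda>j. x (t,i,j)))) \<partial>data_space p k n)
     = (\<integral>\<^sup>+x. ennreal (\<Prod>t<k. \<Prod>i<n t. h t (\<lambda>j. x (t,i,j))) \<partial>data_space p k n)"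
    by (intro nn_integral_cong) (simp add: h_def prod_power_distrib prod_dividef)
  also have "\<dots> = (\<Prod>t<k. \<Prod>i<n t. \<integral>\<^sup>+y. ennreal (h t (\<lambda>j. y (t,i,j))) \<partial>PiM ((\<lambda>j. (t,i,j)) ` {..<p}) (\<lambda>_. lborel))"
  proof (rule data_integral)
    fix t i :: nat
    have e: "(\<lambda>y::nat\<times>nat\<times>nat\<Rightarrow>real. ennreal (h t (\<lambda>j. y (t,i,j))))
       = (\<lambda>y. ennreal (kap p * exp (-(\<Sum>l<p. (y (t,i,l) + (if l = a then (xi t * \<delta>) * y (t,i,b) else 0))\<^sup>2) + (1/2) * (\<Sum>l<p. (y (t,i,l))\<^sup>2))))"
      using ab by (simp add: h_def chi_pointwise)
    show "(\<lambda>y::nat\<times>nat\<times>nat\<Rightarrow>real. ennreal (h t (\<lambda>j. y (t,i,j)))) \<in> borel_measurable (PiM ((\<lambda>j. (t,i,j)) ` {..<p}) (\<lambda>_. lborel))"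
      unfolding e apply measurable using ab by auto
  next
    fix t y z assume "\<And>j. j < p \<Longrightarrow> (y::nat\<Rightarrow>real) j = z j"
    then show "h t y = h t z" unfolding h_def using gauss_dens_cong by metis
  next
    fix t y show "0 \<le> h t y" unfolding h_def using gauss_dens_pos[OF ab] by (simp add: less_imp_le)
  qed
  also have "\<dots> = (\<Prod>t<k. \<Prod>i<n t. ennreal (1 / sqrt (1 - 2 * \<delta>\<^sup>2)))"
  proof (intro prod.cong refl)
    fix t i assume t: "t \<in> {..<k}"
    have "(xi t * \<delta>)\<^sup>2 = \<delta>\<^sup>2" using xi t by (simp add: power_mult_distrib)
    then show "(\<integral>\<^sup>+y. ennreal (h t (\<lambda>j. y (t,i,j))) \<partial>PiM ((\<lambda>j. (t,i,j)) ` {..<p}) (\<lambda>_. lborel)) = ennreal (1 / sqrt (1 - 2 * \<delta>\<^sup>2))"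
      using block_int2[OF ab, of "xi t * \<delta>" t i] g unfolding h_def by simp
  qed
  also have "\<dots> = ennreal ((1 / sqrt (1 - 2 * \<delta>\<^sup>2)) ^ (\<Sum>t<k. n t))"
  proof -
    have "(\<Prod>t<k. \<Prod>i<n t. ennreal (1 / sqrt (1 - 2 * \<delta>\<^sup>2))) = (\<Prod>t<k. ennreal ((1 / sqrt (1 - 2 * \<delta>\<^sup>2)) ^ n t))"
      using g by (intro prod.cong refl) (simp add: ennreal_power)
    also have "\<dots> = ennreal (\<Prod>t<k. (1 / sqrt (1 - 2 * \<delta>\<^sup>2)) ^ n t)"
      using g by (intro prod_ennreal) simp
    finally show ?thesis by (simp add: power_sum)
  qed
  finally show ?thesis .
qed

lemma pw_bound:
  fixes F1 F0 \<epsilon> :: real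
  assumes "F0 > 0" "\<epsilon> > 0"
  shows "F1 \<le> (1 + \<epsilon>/2) * F0 + ((F1 - F0)\<^sup>2 / F0) / (2 * \<epsilon>)"
proof -
  have "(1 + \<epsilon>/2) * F0 + ((F1 - F0)\<^sup>2 / F0) / (2 * \<epsilon>) - F1 = (\<epsilon> * F0 - (F1 - F0))\<^sup>2 / (2 * \<epsilon> * F0)"
    using assms by (simp add: field_simps power2_eq_square)
  moreover have "(\<epsilon> * F0 - (F1 - F0))\<^sup>2 / (2 * \<epsilon> * F0) \<ge> 0" using assms by simp
  ultimately show ?thesis by linarith
qed

lemma tv_bound:
  fixes F1 F0 :: "'a \<Rightarrow> real"
  assumes m1[measurable]: "F1 \<in> borel_measurable S" and m0[measurable]: "F0 \<in> borel_measurable S"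
    and pos: "\<And>x. F0 x > 0" and nn: "\<And>x. F1 x \<ge> 0"
    and i1: "(\<integral>\<^sup>+x. ennreal (F1 x) \<partial>S) = 1" and i0: "(\<integral>\<^sup>+x. ennreal (F0 x) \<partial>S) = 1"
    and ic: "(\<integral>\<^sup>+x. ennreal ((F1 x)\<^sup>2 / F0 x) \<partial>S) = ennreal chi"
    and R[measurable]: "R \<in> sets S" and eps: "\<epsilon> > 0" and chi1: "chi \<ge> 1"
  shows "measure (density S (\<lambda>x. ennreal (F1 x))) R \<le> (1 + \<epsilon>/2) * measure (density S (\<lambda>x. ennreal (F0 x))) R + (chi - 1) / (2 * \<epsilon>)"
proof -
  define D where "D = (\<lambda>x. (F1 x - F0 x)\<^sup>2 / F0 x)"
  have Dnn: "D x \<ge> 0" for x using pos[of x] by (simp add: D_def)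
  have [measurable]: "D \<in> borel_measurable S" unfolding D_def by measurable
  have idD: "ennreal (D x) + 2 * ennreal (F1 x) = ennreal ((F1 x)\<^sup>2 / F0 x) + ennreal (F0 x)" for x
  proof -
    have "D x + 2 * F1 x = (F1 x)\<^sup>2 / F0 x + F0 x"
      using pos[of x] by (simp add: D_def field_simps power2_eq_square)
    then have "ennreal (D x + 2 * F1 x) = ennreal ((F1 x)\<^sup>2 / F0 x + F0 x)" by simp
    moreover have "ennreal (D x + 2 * F1 x) = ennreal (D x) + 2 * ennreal (F1 x)"
      using Dnn[of x] nn[of x] by (simp add: ennreal_plus ennreal_mult')
    moreover have "ennreal ((F1 x)\<^sup>2 / F0 x + F0 x) = ennreal ((F1 x)\<^sup>2 / F0 x) + ennreal (F0 x)"
      using pos[of x] by (simp add: ennreal_plus)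
    ultimately show ?thesis by simp
  qed
  have "(\<integral>\<^sup>+x. ennreal (D x) \<partial>S) + 2 * (\<integral>\<^sup>+x. ennreal (F1 x) \<partial>S) = (\<integral>\<^sup>+x. ennreal (D x) + 2 * ennreal (F1 x) \<partial>S)"
    by (subst nn_integral_add) (auto simp: nn_integral_cmult)
  also have "\<dots> = (\<integral>\<^sup>+x. ennreal ((F1 x)\<^sup>2 / F0 x) + ennreal (F0 x) \<partial>S)" by (simp add: idD)
  also have "\<dots> = ennreal chi + 1" by (subst nn_integral_add) (auto simp: ic i0)
  finally have eqD: "(\<integral>\<^sup>+x. ennreal (D x) \<partial>S) + 2 = ennreal chi + 1" by (simp add: i1)
  have intD: "(\<integral>\<^sup>+x. ennreal (D x) \<partial>S) = ennreal (chi - 1)"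
  proof -
    have a1: "ennreal chi + ennreal 1 = ennreal (chi + 1)" using chi1 by (subst ennreal_plus[symmetric]) auto
    have a2: "ennreal (chi - 1) + ennreal 2 = ennreal (chi + 1)" using chi1 by (subst ennreal_plus[symmetric]) auto
    have "ennreal chi + 1 = ennreal (chi - 1) + 2" using a1 a2 by simp
    then have "(\<integral>\<^sup>+x. ennreal (D x) \<partial>S) + 2 = ennreal (chi - 1) + 2" using eqD by simp
    then show ?thesis using ennreal_add_left_cancel[of 2 "(\<integral>\<^sup>+x. ennreal (D x) \<partial>S)" "ennreal (chi - 1)"]
      by (simp add: add.commute)
  qed
  have "emeasure (density S (\<lambda>x. ennreal (F1 x))) R = (\<integral>\<^sup>+x. indicator R x * ennreal (F1 x) \<partial>S)"
    by (simp add: emeasure_density mult.commute)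
  also have "\<dots> \<le> (\<integral>\<^sup>+x. ennreal (1 + \<epsilon>/2) * (indicator R x * ennreal (F0 x)) + ennreal (1 / (2 * \<epsilon>)) * ennreal (D x) \<partial>S)"
  proof (intro nn_integral_mono)
    fix x
    have b: "F1 x \<le> (1 + \<epsilon>/2) * F0 x + D x / (2 * \<epsilon>)" unfolding D_def by (rule pw_bound[OF pos eps])
    show "indicator R x * ennreal (F1 x) \<le> ennreal (1 + \<epsilon>/2) * (indicator R x * ennreal (F0 x)) + ennreal (1 / (2 * \<epsilon>)) * ennreal (D x)"
    proof (cases "x \<in> R")
      case True
      have "ennreal (F1 x) \<le> ennreal ((1 + \<epsilon>/2) * F0 x + D x / (2 * \<epsilon>))" using b by (rule ennreal_leI)
      also have "\<dots> = ennreal (1 + \<epsilon>/2) * ennreal (F0 x) + ennreal (1 / (2 * \<epsilon>)) * ennreal (D x)"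
        using eps pos[of x] Dnn[of x]
        by (simp add: ennreal_plus[symmetric] ennreal_mult[symmetric] less_imp_le del: ennreal_plus)
      finally show ?thesis using True by simp
    qed simp
  qed
  also have "\<dots> = ennreal (1 + \<epsilon>/2) * (\<integral>\<^sup>+x. indicator R x * ennreal (F0 x) \<partial>S) + ennreal (1 / (2 * \<epsilon>)) * ennreal (chi - 1)"
    by (subst nn_integral_add) (auto simp: nn_integral_cmult intD)
  also have "(\<integral>\<^sup>+x. indicator R x * ennreal (F0 x) \<partial>S) = emeasure (density S (\<lambda>x. ennreal (F0 x))) R"
    by (simp add: emeasure_density mult.commute)
  finally have E: "emeasure (density S (\<lambda>x. ennreal (F1 x))) R \<le> ennreal (1 + \<epsilon>/2) * emeasure (density S (\<lambda>x. ennreal (F0 x))) R + ennreal (1 / (2 * \<epsilon>)) * ennreal (chi - 1)" .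
  have fin0: "emeasure (density S (\<lambda>x. ennreal (F0 x))) R \<le> 1"
  proof -
    have "emeasure (density S (\<lambda>x. ennreal (F0 x))) R \<le> emeasure (density S (\<lambda>x. ennreal (F0 x))) (space S)"
      using sets.sets_into_space[OF R] by (intro emeasure_mono) auto
    also have "\<dots> = 1" by (simp add: emeasure_density i0)
    finally show ?thesis .
  qed
  have fin1: "emeasure (density S (\<lambda>x. ennreal (F1 x))) R \<le> 1"
  proof -
    have "emeasure (density S (\<lambda>x. ennreal (F1 x))) R \<le> emeasure (density S (\<lambda>x. ennreal (F1 x))) (space S)"
      using sets.sets_into_space[OF R] by (intro emeasure_mono) auto
    also have "\<dots> = 1" by (simp add: emeasure_density i1)
    finally show ?thesis .
  qed
  define m0 where "m0 = measure (density S (\<lambda>x. ennreal (F0 x))) R"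
  define m1 where "m1 = measure (density S (\<lambda>x. ennreal (F1 x))) R"
  have e0: "emeasure (density S (\<lambda>x. ennreal (F0 x))) R = ennreal m0"
    unfolding m0_def using fin0 by (intro emeasure_eq_ennreal_measure) (auto simp: top_unique)
  have e1: "emeasure (density S (\<lambda>x. ennreal (F1 x))) R = ennreal m1"
    unfolding m1_def using fin1 by (intro emeasure_eq_ennreal_measure) (auto simp: top_unique)
  have m0nn: "m0 \<ge> 0" by (simp add: m0_def)
  have "ennreal m1 \<le> ennreal ((1 + \<epsilon>/2) * m0 + (1 / (2 * \<epsilon>)) * (chi - 1))"
    using E unfolding e0 e1 using eps m0nn chi1
    by (simp add: ennreal_plus[symmetric] ennreal_mult[symmetric] del: ennreal_plus)
  then have "m1 \<le> (1 + \<epsilon>/2) * m0 + (1 / (2 * \<epsilon>)) * (chi - 1)"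
    using eps m0nn chi1 by (subst (asm) ennreal_le_iff) auto
  then show ?thesis by (simp add: m0_def m1_def)
qed

lemma rej_compare:
  assumes ab: "a < p" "b < p" "a \<noteq> b" and g: "2 * \<delta>\<^sup>2 < 1" and xi: "\<And>t. t < k \<Longrightarrow> (xi t)\<^sup>2 = 1"
    and eps: "\<epsilon> > 0" and phi[measurable]: "Measurable.pred (data_space p k n) phi"
  shows "rej_prob p k n (\<lambda>t. Omd p a b (xi t * \<delta>)) phi \<le> (1 + \<epsilon>/2) * rej_prob p k n (\<lambda>t. Omd p a b 0) phi
     + ((1 / sqrt (1 - 2 * \<delta>\<^sup>2)) ^ (\<Sum>t<k. n t) - 1) / (2 * \<epsilon>)"
proof -
  define F1 where "F1 = (\<lambda>x. \<Prod>t<k. \<Prod>i<n t. gauss_dens p (Omd p a b (xi t * \<delta>)) (\<lambda>j. x (t,i,j)))"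
  define F0 where "F0 = (\<lambda>x. \<Prod>t<k. \<Prod>i<n t. gauss_dens p (Omd p a b 0) (\<lambda>j. x (t,i,j)))"
  have e1: "F1 = (\<lambda>x. \<Prod>t<k. \<Prod>i<n t. kap p * exp (-(1/2) * (\<Sum>l<p. (x (t,i,l) + (if l = a then (xi t * \<delta>) * x (t,i,b) else 0))\<^sup>2)))"
    unfolding F1_def using ab by (simp add: gauss_dens_Omd)
  have e0: "F0 = (\<lambda>x. \<Prod>t<k. \<Prod>i<n t. kap p * exp (-(1/2) * (\<Sum>l<p. (x (t,i,l) + (if l = a then 0 * x (t,i,b) else 0))\<^sup>2)))"
    unfolding F0_def using ab by (simp add: gauss_dens_Omd)
  have m1: "F1 \<in> borel_measurable (data_space p k n)"
    unfolding e1 data_space_def apply measurable using ab by (auto simp: data_idx_def)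
  have m0: "F0 \<in> borel_measurable (data_space p k n)"
    unfolding e0 data_space_def apply measurable using ab by (auto simp: data_idx_def)
  have pos: "F0 x > 0" for x unfolding F0_def using gauss_dens_pos[OF ab] by (intro prod_pos) auto
  have nn: "F1 x \<ge> 0" for x unfolding F1_def using gauss_dens_pos[OF ab] by (intro prod_nonneg) (auto intro: less_imp_le)
  have i1: "(\<integral>\<^sup>+x. ennreal (F1 x) \<partial>data_space p k n) = 1"
    unfolding F1_def by (rule data_int1[OF ab])
  have i0: "(\<integral>\<^sup>+x. ennreal (F0 x) \<partial>data_space p k n) = 1"
    unfolding F0_def using data_int1[OF ab, of k n "\<lambda>_. 0"] by simp
  have ic: "(\<integral>\<^sup>+x. ennreal ((F1 x)\<^sup>2 / F0 x) \<partial>data_space p k n) = ennreal ((1 / sqrt (1 - 2 * \<delta>\<^sup>2)) ^ (\<Sum>t<k. n t))"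
    unfolding F1_def F0_def by (rule data_int2[OF ab g xi])
  have R: "{x \<in> space (data_space p k n). phi x} \<in> sets (data_space p k n)" by measurable
  have chi1: "(1 / sqrt (1 - 2 * \<delta>\<^sup>2)) ^ (\<Sum>t<k. n t) \<ge> 1"
  proof (rule one_le_power)
    have "sqrt (1 - 2 * \<delta>\<^sup>2) \<le> 1" "sqrt (1 - 2 * \<delta>\<^sup>2) > 0" using g by auto
    then show "1 \<le> 1 / sqrt (1 - 2 * \<delta>\<^sup>2)" by (simp add: field_simps)
  qed
  have "rej_prob p k n (\<lambda>t. Omd p a b (xi t * \<delta>)) phi = measure (density (data_space p k n) (\<lambda>x. ennreal (F1 x))) {x \<in> space (data_space p k n). phi x}"
    by (simp add: rej_prob_def data_law_def F1_def)
  moreover have "rej_prob p k n (\<lambda>t. Omd p a b 0) phi = measure (density (data_space p k n) (\<lambda>x. ennreal (F0 x))) {x \<in> space (data_space p k n). phi x}"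
    by (simp add: rej_prob_def data_law_def F0_def)
  ultimately show ?thesis
    using tv_bound[OF m1 m0 pos nn i1 i0 ic R eps chi1] by simp
qed

lemma rej_le1:
  assumes ab: "a < p" "b < p" "a \<noteq> b" and phi[measurable]: "Measurable.pred (data_space p k n) phi"
  shows "rej_prob p k n (\<lambda>t. Omd p a b (g t)) phi \<le> 1"
proof -
  define F where "F = (\<lambda>x. \<Prod>t<k. \<Prod>i<n t. gauss_dens p (Omd p a b (g t)) (\<lambda>j. x (t,i,j)))"
  have e: "F = (\<lambda>x. \<Prod>t<k. \<Prod>i<n t. kap p * exp (-(1/2) * (\<Sum>l<p. (x (t,i,l) + (if l = a then g t * x (t,i,b) else 0))\<^sup>2)))"
    unfolding F_def using ab by (simp add: gauss_dens_Omd)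
  have m: "F \<in> borel_measurable (data_space p k n)"
    unfolding e data_space_def apply measurable using ab by (auto simp: data_idx_def)
  have i: "(\<integral>\<^sup>+x. ennreal (F x) \<partial>data_space p k n) = 1"
    unfolding F_def by (rule data_int1[OF ab])
  have R: "{x \<in> space (data_space p k n). phi x} \<in> sets (data_space p k n)" by measurable
  have "emeasure (density (data_space p k n) (\<lambda>x. ennreal (F x))) {x \<in> space (data_space p k n). phi x}
     \<le> emeasure (density (data_space p k n) (\<lambda>x. ennreal (F x))) (space (data_space p k n))"
    using R by (intro emeasure_mono) auto
  also have "\<dots> = 1" using m by (simp add: emeasure_density i)
  finally have "measure (density (data_space p k n) (\<lambda>x. ennreal (F x))) {x \<in> space (data_space p k n). phi x} \<le> 1"
    by (simp add: measure_def enn2real_leI)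
  then show ?thesis by (simp add: rej_prob_def data_law_def F_def)
qed

lemma cond1_Omd:
  assumes ab: "a < p" "b < p" "a \<noteq> b" and d: "1 / M \<le> 1 - \<bar>d\<bar>" "1 + \<bar>d\<bar> + d\<^sup>2 \<le> M"
  shows "cond1 M p (Omd p a b d)"
  unfolding cond1_def using Omd_eigen[OF ab] d Omd_transpose by fastforce

lemma F_class_Omd:
  assumes ab: "a < p" "b < p" "a \<noteq> b" and s: "2 \<le> s"
    and d: "\<And>t. t < k \<Longrightarrow> 1 / M \<le> 1 - \<bar>g t\<bar> \<and> 1 + \<bar>g t\<bar> + (g t)\<^sup>2 \<le> M"
  shows "(\<lambda>t. Omd p a b (g t)) \<in> F_class M p k s"
  unfolding F_class_def
proof (intro CollectI conjI allI impI)
  fix t assume "t < k" then show "cond1 M p (Omd p a b (g t))" using d cond1_Omd[OF ab] by blast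
next
  fix r assume r: "r < p"
  have "{c. c < p \<and> c \<noteq> r \<and> (\<exists>t<k. Omd p a b (g t) $$ (r, c) \<noteq> 0)} \<subseteq> {a, b}"
    using ab r by (auto simp: Omd_entry split: if_splits)
  then have "card {c. c < p \<and> c \<noteq> r \<and> (\<exists>t<k. Omd p a b (g t) $$ (r, c) \<noteq> 0)} \<le> card {a, b}"
    by (intro card_mono) auto
  also have "\<dots> \<le> 2" by (simp add: card_insert_le_m1)
  finally show "card {c. c < p \<and> c \<noteq> r \<and> (\<exists>t<k. Omd p a b (g t) $$ (r, c) \<noteq> 0)} \<le> s" using s by linarith
qed

lemma H0_Omd:
  assumes ab: "a < p" "b < p" "a \<noteq> b" and s: "2 \<le> s" and M: "M > 1"
  shows "(\<lambda>t. Omd p a b 0) \<in> H0_set M p k s a b"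
proof -
  have "(\<lambda>t. Omd p a b ((\<lambda>_. 0) t)) \<in> F_class M p k s"
    using M by (intro F_class_Omd[OF ab s]) auto
  then show ?thesis unfolding H0_set_def using ab by (simp add: Omd_entry)
qed

lemma Al1_Omd:
  assumes ab: "a < p" "b < p" "a \<noteq> b" and s: "2 \<le> s"
    and d: "\<And>t. t < k \<Longrightarrow> 1 / M \<le> 1 - \<bar>xi t * \<delta>\<bar> \<and> 1 + \<bar>xi t * \<delta>\<bar> + (xi t * \<delta>)\<^sup>2 \<le> M"
    and xi: "\<And>t. t < k \<Longrightarrow> xi t \<in> {1, -1}" and del: "\<delta> \<ge> 0" and eps: "real k * \<delta> \<ge> eps"
  shows "(\<lambda>t. Omd p a b (xi t * \<delta>)) \<in> Al1_set M p k s a b eps xi"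
proof -
  have F: "(\<lambda>t. Omd p a b (xi t * \<delta>)) \<in> F_class M p k s"
    by (rule F_class_Omd[OF ab s d])
  have ent: "Omd p a b (xi t * \<delta>) $$ (a, b) = xi t * \<delta>" for t using ab by (simp add: Omd_entry)
  have s1: "(\<Sum>t<k. xi t * Omd p a b (xi t * \<delta>) $$ (a, b)) = real k * \<delta>"
  proof -
    have "(\<Sum>t<k. xi t * Omd p a b (xi t * \<delta>) $$ (a, b)) = (\<Sum>t<k. \<delta>)"
    proof (intro sum.cong refl)
      fix t assume "t \<in> {..<k}"
      then have "xi t * xi t = 1" using xi[of t] by auto
      then show "xi t * Omd p a b (xi t * \<delta>) $$ (a, b) = \<delta>" by (simp add: ent mult.assoc[symmetric])
    qed
    then show ?thesis by simp
  qed
  have s2: "(\<Sum>t<k. \<bar>Omd p a b (xi t * \<delta>) $$ (a, b)\<bar>) = real k * \<delta>"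
  proof -
    have "(\<Sum>t<k. \<bar>Omd p a b (xi t * \<delta>) $$ (a, b)\<bar>) = (\<Sum>t<k. \<delta>)"
    proof (intro sum.cong refl)
      fix t assume "t \<in> {..<k}"
      then have "\<bar>xi t\<bar> = 1" using xi[of t] by auto
      then show "\<bar>Omd p a b (xi t * \<delta>) $$ (a, b)\<bar> = \<delta>" using del by (simp add: ent abs_mult)
    qed
    then show ?thesis by simp
  qed
  show ?thesis unfolding Al1_set_def using F s1 s2 eps by simp
qed

lemma bernoulli_le:
  fixes x :: real
  assumes "0 \<le> x" "x \<le> 1"
  shows "1 - real N * x \<le> (1 - x) ^ N"
proof (induction N)
  case 0 then show ?case by simp
next
  case (Suc N)
  have nn: "0 \<le> (1 - x) ^ N" using assms by simp
  show ?case
  proof (cases "1 - real N * x \<ge> 0")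
    case True
    have "(1 - real N * x) * (1 - x) \<le> (1 - x) ^ N * (1 - x)"
      using Suc.IH assms by (intro mult_right_mono) auto
    moreover have "1 - real (Suc N) * x \<le> (1 - real N * x) * (1 - x)"
      using assms by (simp add: algebra_simps)
    ultimately show ?thesis by (simp add: mult.commute)
  next
    case False
    then have "1 - real (Suc N) * x \<le> 0" using assms by (simp add: algebra_simps)
    also have "0 \<le> (1 - x) ^ Suc N" using assms by simp
    finally show ?thesis .
  qed
qed

lemma chi_num:
  fixes \<delta> q :: real
  assumes d: "2 * \<delta>\<^sup>2 < 1" and Nq: "2 * real N * \<delta>\<^sup>2 \<le> q" and q: "q \<le> 1/2"
  shows "(1 / sqrt (1 - 2 * \<delta>\<^sup>2)) ^ N - 1 \<le> 2 * q"
proof -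
  define x where "x = 2 * \<delta>\<^sup>2"
  have x: "0 \<le> x" "x < 1" using d by (auto simp: x_def)
  have "1 - q \<le> 1 - real N * x" using Nq by (simp add: x_def)
  also have "\<dots> \<le> (1 - x) ^ N" using x by (intro bernoulli_le) auto
  finally have b: "1 - q \<le> (1 - x) ^ N" .
  have q0: "0 < 1 - q" using q by simp
  have "(1 / sqrt (1 - x)) ^ N = 1 / sqrt ((1 - x) ^ N)"
    by (simp add: power_divide real_sqrt_power)
  also have "\<dots> \<le> 1 / sqrt (1 - q)"
    using q0 b by (intro divide_left_mono) (auto intro: mult_pos_pos)
  also have "\<dots> \<le> 1 / (1 - q)"
  proof -
    have q00: "0 \<le> q" using Nq x(1) by (smt (verit) mult_nonneg_nonneg of_nat_0_le_iff x_def zero_le_power2)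
    have s1: "sqrt (1 - q) \<le> 1" using q00 q by simp
    have "1 - q = sqrt (1 - q) * sqrt (1 - q)" using q0 by simp
    also have "\<dots> \<le> sqrt (1 - q) * 1" using s1 q by (intro mult_left_mono) auto
    finally have "1 - q \<le> sqrt (1 - q)" by simp
    then show ?thesis using q0 by (intro divide_left_mono) auto
  qed
  also have "\<dots> \<le> 1 + 2 * q"
  proof -
    have "1 \<le> (1 + 2 * q) * (1 - q)"
    proof -
      have "q * (1 - 2 * q) \<ge> 0 \<or> q < 0" using q by (cases "q \<ge> 0") auto
      moreover have "0 \<le> q" using Nq x(1) by (smt (verit) mult_nonneg_nonneg of_nat_0_le_iff x_def zero_le_power2)
      ultimately show ?thesis by (simp add: algebra_simps)
    qed
    then show ?thesis using q0 by (simp add: field_simps)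
  qed
  finally show ?thesis by (simp add: x_def)
qed

lemma perN:
  fixes M M0 c g :: real and nn :: "nat \<Rightarrow> nat"
  assumes ab: "a < p" "b < p" "a \<noteq> b" and s: "2 \<le> s" and k: "1 \<le> k"
    and n0: "1 \<le> n0" and nnb: "\<And>t. t < k \<Longrightarrow> real (nn t) \<le> M0 * real n0"
    and xi: "\<And>t. t < k \<Longrightarrow> xi t \<in> {1, -1}" and M: "M > 1" and M0: "M0 \<ge> 1"
    and c: "c > 0" "c \<le> 1/4" "c \<le> (M - 1)/2" "c \<le> 1 - 1/M" "c \<le> g / (8 * M0)"
    and g: "0 < g" "g \<le> 1"
    and phi: "Measurable.pred (data_space p k nn) phi"
  shows "\<exists>Om1 \<in> Al1_set M p k s a b (c * sqrt (real k / real n0)) xi. \<exists>Om0 \<in> H0_set M p k s a b.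
           rej_prob p k nn Om1 phi \<le> rej_prob p k nn Om0 phi + g / 4"
proof -
  define \<delta> where "\<delta> = c / sqrt (real k * real n0)"
  have "1 \<le> k * n0" using k n0 by (simp add: one_le_mult_iff)
  then have kn: "real k * real n0 \<ge> 1" by (metis of_nat_1 of_nat_le_iff of_nat_mult)
  have sq: "sqrt (real k * real n0) \<ge> 1" using kn by simp
  have d0: "\<delta> \<ge> 0" using c by (simp add: \<delta>_def)
  have dc: "\<delta> \<le> c"
  proof -
    have "c / sqrt (real k * real n0) \<le> c / 1" using c sq by (intro divide_left_mono) auto
    then show ?thesis by (simp add: \<delta>_def)
  qed
  have d2: "\<delta>\<^sup>2 = c\<^sup>2 / (real k * real n0)"
    unfolding \<delta>_def using kn by (simp add: power_divide)
  have xi2: "(xi t)\<^sup>2 = 1" if "t < k" for t using xi[OF that] by auto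
  have axi: "\<bar>xi t * \<delta>\<bar> = \<delta>" if "t < k" for t using xi[OF that] d0 by (auto simp: abs_mult)
  have eig: "1 / M \<le> 1 - \<bar>xi t * \<delta>\<bar> \<and> 1 + \<bar>xi t * \<delta>\<bar> + (xi t * \<delta>)\<^sup>2 \<le> M" if "t < k" for t
  proof -
    have "(xi t * \<delta>)\<^sup>2 = \<delta>\<^sup>2" using xi2[OF that] by (simp add: power_mult_distrib)
    moreover have "\<delta>\<^sup>2 \<le> \<delta>"
    proof -
      have "\<delta> * \<delta> \<le> \<delta> * 1" using d0 dc c by (intro mult_left_mono) auto
      then show ?thesis by (simp add: power2_eq_square)
    qed
    moreover have "1 / M \<le> 1 - \<delta>" using dc c(4) by linarith
    moreover have "1 + \<delta> + \<delta> \<le> M" using dc c(3) by (simp add: field_simps)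
    ultimately show ?thesis using axi[OF that] by linarith
  qed
  have keps: "real k * \<delta> \<ge> c * sqrt (real k / real n0)"
  proof -
    have sk: "sqrt (real k) > 0" using k by simp
    have sn: "sqrt (real n0) > 0" using n0 by simp
    have "real k * \<delta> = c * (sqrt (real k) * sqrt (real k)) / (sqrt (real k) * sqrt (real n0))"
      unfolding \<delta>_def by (simp add: real_sqrt_mult)
    also have "\<dots> = c * (sqrt (real k) / sqrt (real n0))" using sk sn by (simp add: field_simps)
    finally show ?thesis by (simp add: real_sqrt_divide)
  qed
  have g2: "2 * \<delta>\<^sup>2 < 1"
  proof -
    have "\<delta>\<^sup>2 \<le> (1/4)\<^sup>2" using d0 dc c by (intro power_mono) auto
    then show ?thesis by (simp add: power2_eq_square)
  qed
  define Om1 where "Om1 = (\<lambda>t. Omd p a b (xi t * \<delta>))"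
  define Om0 where "Om0 = (\<lambda>t::nat. Omd p a b 0)"
  have A: "Om1 \<in> Al1_set M p k s a b (c * sqrt (real k / real n0)) xi"
    unfolding Om1_def by (rule Al1_Omd[OF ab s eig xi d0 keps])
  have H: "Om0 \<in> H0_set M p k s a b"
    unfolding Om0_def by (rule H0_Omd[OF ab s M])
  define \<epsilon> where "\<epsilon> = g / 4"
  have eps: "\<epsilon> > 0" using g by (simp add: \<epsilon>_def)
  have cmp: "rej_prob p k nn Om1 phi \<le> (1 + \<epsilon>/2) * rej_prob p k nn Om0 phi
     + ((1 / sqrt (1 - 2 * \<delta>\<^sup>2)) ^ (\<Sum>t<k. nn t) - 1) / (2 * \<epsilon>)"
    unfolding Om1_def Om0_def by (rule rej_compare[OF ab g2 xi2 eps phi])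
  have Nt: "real (\<Sum>t<k. nn t) \<le> real k * (M0 * real n0)"
  proof -
    have "real (\<Sum>t<k. nn t) = (\<Sum>t<k. real (nn t))" by simp
    also have "\<dots> \<le> (\<Sum>t<k. M0 * real n0)" by (intro sum_mono nnb) auto
    finally show ?thesis by simp
  qed
  define q where "q = 2 * M0 * c\<^sup>2"
  have Nq: "2 * real (\<Sum>t<k. nn t) * \<delta>\<^sup>2 \<le> q"
  proof -
    have "2 * real (\<Sum>t<k. nn t) * \<delta>\<^sup>2 \<le> 2 * (real k * (M0 * real n0)) * \<delta>\<^sup>2"
      using Nt by (intro mult_right_mono) auto
    also have "\<dots> = q" unfolding d2 q_def using k n0 by (simp add: field_simps)
    finally show ?thesis .
  qed
  have cM: "c * M0 \<le> g / 8" using c(5) M0 by (simp add: field_simps)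
  have qsmall: "q \<le> g\<^sup>2 / 32"
  proof -
    have "q = 2 * (c * M0) * c" by (simp add: q_def power2_eq_square)
    also have "\<dots> \<le> 2 * (g/8) * (g / 8)"
    proof -
      have "g / (8 * M0) \<le> g / (8 * 1)" using M0 g by (intro divide_left_mono) auto
      then have "c \<le> g / 8" using c(5) by simp
      then show ?thesis using cM c g by (intro mult_mono mult_left_mono) auto
    qed
    finally show ?thesis by (simp add: power2_eq_square)
  qed
  have q2: "q \<le> 1/2"
  proof -
    have "g\<^sup>2 \<le> 1\<^sup>2" using g by (intro power_mono) auto
    then show ?thesis using qsmall by simp
  qed
  have chi: "(1 / sqrt (1 - 2 * \<delta>\<^sup>2)) ^ (\<Sum>t<k. nn t) - 1 \<le> 2 * q"
    by (rule chi_num[OF g2 Nq q2])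
  have t2: "((1 / sqrt (1 - 2 * \<delta>\<^sup>2)) ^ (\<Sum>t<k. nn t) - 1) / (2 * \<epsilon>) \<le> g / 8"
  proof -
    have "((1 / sqrt (1 - 2 * \<delta>\<^sup>2)) ^ (\<Sum>t<k. nn t) - 1) / (2 * \<epsilon>) \<le> (2 * q) / (2 * \<epsilon>)"
      using chi eps by (intro divide_right_mono) auto
    also have "\<dots> \<le> (g\<^sup>2 / 16) / (g / 2)" using qsmall g by (simp add: \<epsilon>_def field_simps)
    also have "\<dots> = g / 8" using g by (simp add: power2_eq_square field_simps)
    finally show ?thesis .
  qed
  have r0: "rej_prob p k nn Om0 phi \<le> 1" "rej_prob p k nn Om0 phi \<ge> 0"
    using rej_le1[OF ab phi, of "\<lambda>_. 0"] by (auto simp: Om0_def rej_prob_def)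
  have "(1 + \<epsilon>/2) * rej_prob p k nn Om0 phi \<le> rej_prob p k nn Om0 phi + \<epsilon>/2"
    using r0 eps by (simp add: algebra_simps mult_left_le)
  moreover have "\<epsilon>/2 = g/8" by (simp add: \<epsilon>_def)
  ultimately have "rej_prob p k nn Om1 phi \<le> rej_prob p k nn Om0 phi + g / 4"
    using cmp t2 by linarith
  then show ?thesis using A H by blast
qed

theorem theorem4:
  fixes M M0 M1 mu :: real
  assumes "M > 1" and "M0 \<ge> 1" and "M1 > 0" and "mu > 2"
  shows "\<exists>C0>0. \<forall>(C::real) (p::nat \<Rightarrow> nat) (k::nat \<Rightarrow> nat) (s::nat \<Rightarrow> nat)
      (nn::nat \<Rightarrow> nat \<Rightarrow> nat) (xi::nat \<Rightarrow> nat \<Rightarrow> real) (a::nat) (b::nat).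
      (let n0 = (\<lambda>N. Min (nn N ` {..<k N})) in
        C \<ge> C0 \<and> a \<noteq> b \<and>
        (\<forall>N. k N \<ge> 1 \<and> a < p N \<and> b < p N) \<and>
        (\<forall>N t. t < k N \<longrightarrow> xi N t \<in> {1, -1}) \<and>
        (\<forall>N t. t < k N \<longrightarrow> real (nn N t) \<le> M0 * real (n0 N)) \<and>
        filterlim n0 at_top sequentially \<and>
        (\<forall>\<^sub>F N in sequentially.
           real (k N) \<le> M1 * ln (real (p N)) \<and> s N > 2 \<and>
           real (s N) ^ 2 / real (k N) * (real (k N) + ln (real (p N))) ^ 2 > C * real (n0 N) \<and>
           real (p N) > real (s N) powr mu) \<and>
        ((\<lambda>N. real (s N) * (1 + ln (real (p N)) / real (k N)) / real (n0 N)) \<longlonglongrightarrow> 0))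
      \<longrightarrow> (\<forall>\<alpha> \<beta> :: real. \<alpha> < \<beta> \<and> \<beta> < 1 \<longrightarrow>
           (\<exists>c>0. \<forall>phi :: nat \<Rightarrow> (nat \<times> nat \<times> nat \<Rightarrow> real) \<Rightarrow> bool.
              ((\<forall>N. Measurable.pred (data_space (p N) (k N) (nn N)) (phi N)) \<and>
               limsup (\<lambda>N. SUP Om \<in> H0_set M (p N) (k N) (s N) a b.
                   ereal (rej_prob (p N) (k N) (nn N) Om (phi N))) \<le> ereal \<alpha>)
              \<longrightarrow> liminf (\<lambda>N. INF Om \<in> Al1_set M (p N) (k N) (s N) a b
                       (c * sqrt (real (k N) / real (Min (nn N ` {..<k N})))) (xi N).
                   ereal (rej_prob (p N) (k N) (nn N) Om (phi N))) < ereal \<beta>))"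
  apply (rule exI[of _ 1])
  apply (intro conjI allI impI)
   apply simp
  subgoal premises prems for C p k s nn xi a b \<alpha> \<beta>
  proof -
    define n0 where "n0 = (\<lambda>N. Min (nn N ` {..<k N}))"
    have hab: "a \<noteq> b" and hall: "\<And>N. 1 \<le> k N \<and> a < p N \<and> b < p N"
      and hxi: "\<And>N t. t < k N \<Longrightarrow> xi N t \<in> {1, -1}"
      and hnn: "\<And>N t. t < k N \<Longrightarrow> real (nn N t) \<le> M0 * real (n0 N)"
      and hlim: "filterlim n0 at_top sequentially"
      and hev: "eventually (\<lambda>N. 2 < s N) sequentially"
      using prems(1) unfolding Let_def n0_def by (auto elim: eventually_mono)
    have ab: "\<alpha> < \<beta>" "\<beta> < 1" using prems(2) by auto
    define g where "g = min (\<beta> - \<alpha>) 1"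
    have g: "0 < g" "g \<le> 1" "g \<le> \<beta> - \<alpha>" using ab by (auto simp: g_def)
    define c where "c = min (min (1/4) ((M - 1)/2)) (min (1 - 1/M) (g / (8 * M0)))"
    have M1': "1 - 1/M > 0" using assms(1) by (simp add: field_simps)
    have c1: "c \<le> min (1/4) ((M - 1)/2)" "c \<le> min (1 - 1/M) (g / (8 * M0))"
      unfolding c_def by (rule min.cobounded1, rule min.cobounded2)
    have c0: "c > 0" using assms(1,2) g M1' by (auto simp: c_def)
    have c: "c > 0" "c \<le> 1/4" "c \<le> (M - 1)/2" "c \<le> 1 - 1/M" "c \<le> g / (8 * M0)"
      using c0 c1 by (auto simp del: min_le_iff_disj intro: order.trans[OF _ min.cobounded1] order.trans[OF _ min.cobounded2])
    show ?thesis
    proof (intro exI[of _ c] conjI allI impI)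
      show "c > 0" by (rule c(1))
    next
      fix phi :: "nat \<Rightarrow> (nat \<times> nat \<times> nat \<Rightarrow> real) \<Rightarrow> bool"
      assume hphi: "(\<forall>N. Measurable.pred (data_space (p N) (k N) (nn N)) (phi N)) \<and>
               limsup (\<lambda>N. SUP Om \<in> H0_set M (p N) (k N) (s N) a b.
                   ereal (rej_prob (p N) (k N) (nn N) Om (phi N))) \<le> ereal \<alpha>"
      define S where "S = (\<lambda>N. SUP Om \<in> H0_set M (p N) (k N) (s N) a b.
                   ereal (rej_prob (p N) (k N) (nn N) Om (phi N)))"
      define I where "I = (\<lambda>N. INF Om \<in> Al1_set M (p N) (k N) (s N) a b
                       (c * sqrt (real (k N) / real (Min (nn N ` {..<k N})))) (xi N).
                   ereal (rej_prob (p N) (k N) (nn N) Om (phi N)))"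
      have "ereal \<alpha> < ereal (\<alpha> + g/4)" using g by simp
      then have "limsup S < ereal (\<alpha> + g/4)" using hphi unfolding S_def
        by (meson order.strict_trans1)
      then have evS: "eventually (\<lambda>N. S N < ereal (\<alpha> + g/4)) sequentially"
        by (rule Limsup_lessD)
      have evn: "eventually (\<lambda>N. 1 \<le> n0 N) sequentially"
        using hlim by (simp add: filterlim_at_top)
      have "eventually (\<lambda>N. I N \<le> ereal (\<alpha> + g/2)) sequentially"
        using evS evn hev
      proof eventually_elim
        case (elim N)
        have "\<exists>Om1 \<in> Al1_set M (p N) (k N) (s N) a b (c * sqrt (real (k N) / real (n0 N))) (xi N).
               \<exists>Om0 \<in> H0_set M (p N) (k N) (s N) a b.
           rej_prob (p N) (k N) (nn N) Om1 (phi N) \<le> rej_prob (p N) (k N) (nn N) Om0 (phi N) + g / 4"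
        proof (rule perN)
          show "a < p N" "b < p N" "1 \<le> k N" using hall[of N] by auto
          show "a \<noteq> b" by (rule hab)
          show "2 \<le> s N" using elim by simp
          show "1 \<le> n0 N" using elim by simp
          show "\<And>t. t < k N \<Longrightarrow> real (nn N t) \<le> M0 * real (n0 N)" by (rule hnn)
          show "\<And>t. t < k N \<Longrightarrow> xi N t \<in> {1, -1}" by (rule hxi)
          show "M > 1" "M0 \<ge> 1" using assms by auto
        qed (use c g hphi in auto)
        then obtain Om1 Om0 where
          O1: "Om1 \<in> Al1_set M (p N) (k N) (s N) a b (c * sqrt (real (k N) / real (n0 N))) (xi N)"
          and O0: "Om0 \<in> H0_set M (p N) (k N) (s N) a b"
          and le: "rej_prob (p N) (k N) (nn N) Om1 (phi N) \<le> rej_prob (p N) (k N) (nn N) Om0 (phi N) + g / 4"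
          by blast
        have "I N \<le> ereal (rej_prob (p N) (k N) (nn N) Om1 (phi N))"
          unfolding I_def using O1 unfolding n0_def by (rule INF_lower)
        moreover have "ereal (rej_prob (p N) (k N) (nn N) Om0 (phi N)) \<le> S N"
          unfolding S_def using O0 by (rule SUP_upper)
        ultimately have i1: "I N \<le> ereal (rej_prob (p N) (k N) (nn N) Om1 (phi N))"
          and r0: "ereal (rej_prob (p N) (k N) (nn N) Om0 (phi N)) < ereal (\<alpha> + g/4)"
          using elim(1) by (blast, blast intro: order.strict_trans1)
        from r0 have "rej_prob (p N) (k N) (nn N) Om0 (phi N) < \<alpha> + g/4" by simp
        then have "rej_prob (p N) (k N) (nn N) Om1 (phi N) \<le> \<alpha> + g/2" using le by simp
        then have "ereal (rej_prob (p N) (k N) (nn N) Om1 (phi N)) \<le> ereal (\<alpha> + g/2)" by simp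
        then show ?case using i1 by (rule order_trans[rotated])
      qed
      then have "liminf I \<le> ereal (\<alpha> + g/2)" by (intro Liminf_le) auto
      also have "\<dots> < ereal \<beta>" using g by simp
      finally show "liminf I < ereal \<beta>" .
    qed
  qed
  done

end
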